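(* Let $4\le\beta\le n-2$ and let $\gamma_1,\gamma_2,\gamma_3,\gamma_4$ be positive integers with $\gamma_1+\gamma_2+\gamma_3+\gamma_4=n$ such that $\min(\gamma_i,\gamma_j)\ge 2$ for some $1\le i<j\le 4$. Then $\mathcal T_{(n),(\beta),(\gamma_1,\gamma_2,\gamma_3,\gamma_4)}$ has infinitely many $G$-orbits.
   Context: $\mathbb F$ is an infinite field of characteristic $\ne 2$. Equip $\mathbb F^{2n}$ (canonical basis $e_1,\ldots,e_{2n}$) with the symmetric bilinear form $(e_i,e_j)=\delta_{i,2n+1-j}$, and let $G={\rm O}_{2n}(\mathbb F)$ be its isometry group. A subspace $V$ is isotropic if $(V,V)=\{0\}$. For a sequence ${\bf a}=(\alpha_1,\ldots,\alpha_p)$ of positive integers with $\sum\alpha_j\le n$, $M_{\bf a}$ is the set of flags $V_1\subset\cdots\subset V_p$ in $\mathbb F^{2n}$ with $\dim V_j=\alpha_1+\cdots+\alpha_j$ and $V_p$ isotropic. $\mathcal T_{{\bf a},{\bf b},{\bf c}}=M_{\bf a}\times M_{\bf b}\times M_{\bf c}$ with the diagonal $G$-action. *)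

theory Defs
  imports Main
begin

text \<open>Vectors of F^(2n) are functions nat => F supported on {0..<2n}
 (coordinate i corresponds to basis vector e_(i+1)).\<close>

definition vecs :: "nat \<Rightarrow> (nat \<Rightarrow> 'a::field) set" where
  "vecs n = {v. \<forall>i. 2*n \<le> i \<longrightarrow> v i = 0}"

text \<open>(e_i, e_j) = delta_(i, 2n+1-j); in 0-based indices i pairs with 2n-1-i.\<close>
definition bform :: "nat \<Rightarrow> (nat \<Rightarrow> 'a::field) \<Rightarrow> (nat \<Rightarrow> 'a) \<Rightarrow> 'a" where
  "bform n u v = (\<Sum>i<2*n. u i * v (2*n - 1 - i))"

definition lincomb :: "(nat \<Rightarrow> 'a::field) list \<Rightarrow> 'a list \<Rightarrow> (nat \<Rightarrow> 'a)" where
  "lincomb vs cs = (\<lambda>k. \<Sum>j<length vs. cs ! j * (vs ! j) k)"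

definition lspan :: "(nat \<Rightarrow> 'a::field) list \<Rightarrow> (nat \<Rightarrow> 'a) set" where
  "lspan vs = {lincomb vs cs | cs. length cs = length vs}"

definition lin_indep :: "(nat \<Rightarrow> 'a::field) list \<Rightarrow> bool" where
  "lin_indep vs = (\<forall>cs. length cs = length vs \<and> lincomb vs cs = (\<lambda>_. 0)
                      \<longrightarrow> (\<forall>j<length vs. cs ! j = 0))"

definition subspace_dim :: "nat \<Rightarrow> (nat \<Rightarrow> 'a::field) set \<Rightarrow> nat \<Rightarrow> bool" where
  "subspace_dim n V k = (\<exists>vs. length vs = k \<and> set vs \<subseteq> vecs n \<and> lin_indep vs \<and> lspan vs = V)"

definition isotropic :: "nat \<Rightarrow> (nat \<Rightarrow> 'a::field) set \<Rightarrow> bool" where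
  "isotropic n V = (\<forall>u\<in>V. \<forall>v\<in>V. bform n u v = 0)"

definition flags :: "nat \<Rightarrow> nat list \<Rightarrow> (nat \<Rightarrow> 'a::field) set list set" where
  "flags n a = {Vs. length Vs = length a \<and>
      (\<forall>j<length a. subspace_dim n (Vs ! j) (sum_list (take (Suc j) a))) \<and>
      (\<forall>j. Suc j < length a \<longrightarrow> Vs ! j \<subseteq> Vs ! Suc j) \<and>
      isotropic n (last Vs)}"

definition mat_act :: "nat \<Rightarrow> (nat \<Rightarrow> nat \<Rightarrow> 'a::field) \<Rightarrow> (nat \<Rightarrow> 'a) \<Rightarrow> (nat \<Rightarrow> 'a)" where
  "mat_act n g v = (\<lambda>i. if i < 2*n then (\<Sum>j<2*n. g i j * v j) else 0)"

definition orth_group :: "nat \<Rightarrow> ((nat \<Rightarrow> 'a::field) \<Rightarrow> (nat \<Rightarrow> 'a)) set" where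
  "orth_group n = {mat_act n g | g. bij_betw (mat_act n g) (vecs n) (vecs n) \<and>
      (\<forall>u\<in>vecs n. \<forall>v\<in>vecs n. bform n (mat_act n g u) (mat_act n g v) = bform n u v)}"

definition flag_act :: "((nat \<Rightarrow> 'a) \<Rightarrow> (nat \<Rightarrow> 'a)) \<Rightarrow> (nat \<Rightarrow> 'a) set list \<Rightarrow> (nat \<Rightarrow> 'a) set list" where
  "flag_act g Vs = map (\<lambda>V. g ` V) Vs"

definition triple_space :: "nat \<Rightarrow> nat list \<Rightarrow> nat list \<Rightarrow> nat list
     \<Rightarrow> ((nat \<Rightarrow> 'a::field) set list \<times> (nat \<Rightarrow> 'a) set list \<times> (nat \<Rightarrow> 'a) set list) set" where
  "triple_space n a b c = flags n a \<times> flags n b \<times> flags n c"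

definition triple_orbits :: "nat \<Rightarrow> nat list \<Rightarrow> nat list \<Rightarrow> nat list
     \<Rightarrow> ((nat \<Rightarrow> 'a::field) set list \<times> (nat \<Rightarrow> 'a) set list \<times> (nat \<Rightarrow> 'a) set list) set set" where
  "triple_orbits n a b c =
     (\<lambda>(X, Y, Z). (\<lambda>g. (flag_act g X, flag_act g Y, flag_act g Z)) ` orth_group n)
       ` triple_space n a b c"

end

theory Submission
  imports Defs
begin

lemma lincomb_at: "lincomb vs cs k = (\<Sum>j<length vs. cs ! j * (vs ! j) k)"
  by (simp add: lincomb_def)

definition linsub :: "(nat \<Rightarrow> 'a::field) set \<Rightarrow> bool" where
  "linsub X \<longleftrightarrow> (\<lambda>_. 0) \<in> X \<and> (\<forall>u\<in>X. \<forall>v\<in>X. (\<lambda>i. u i + v i) \<in> X) \<and> (\<forall>c. \<forall>u\<in>X. (\<lambda>i. c * u i) \<in> X)"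

lemma linsub_sum:
  assumes "linsub X" "finite J" "\<And>j. j \<in> J \<Longrightarrow> f j \<in> X"
  shows "(\<lambda>k. \<Sum>j\<in>J. f j k) \<in> X"
  using assms(2,3)
proof (induction J rule: finite_induct)
  case empty
  then show ?case using assms(1) by (simp add: linsub_def)
next
  case (insert x F)
  have add: "\<And>a b. a \<in> X \<Longrightarrow> b \<in> X \<Longrightarrow> (\<lambda>i. a i + b i) \<in> X"
    using assms(1) unfolding linsub_def by blast
  have "(\<lambda>k. f x k + (\<Sum>j\<in>F. f j k)) \<in> X"
    using add[OF insert.prems[of x] insert.IH] insert.prems by simp
  then show ?case using insert by simp
qed

lemma lincomb_in:
  assumes "linsub X" "\<And>j. j < length vs \<Longrightarrow> vs ! j \<in> X"
  shows "lincomb vs cs \<in> X"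
proof -
  have "(\<lambda>k. \<Sum>j\<in>{..<length vs}. (\<lambda>k. cs ! j * (vs ! j) k) k) \<in> X"
    apply (rule linsub_sum[OF assms(1)])
    using assms(1) assms(2) unfolding linsub_def by simp_all
  then show ?thesis by (simp add: lincomb_def)
qed

lemma pivot_eval:
  assumes "length ps = length vs" "length cs = length vs"
    and "\<And>j k. j < length vs \<Longrightarrow> k < length vs \<Longrightarrow> (vs!j) (ps!k) = (if j = k then 1 else 0)"
    and "k < length vs"
  shows "lincomb vs cs (ps ! k) = cs ! k"
proof -
  have "lincomb vs cs (ps ! k) = (\<Sum>j<length vs. cs ! j * (if j = k then 1 else 0))"
    unfolding lincomb_at using assms(3,4) by (intro sum.cong) auto
  also have "\<dots> = cs ! k" using assms(4) by (simp add: if_distrib cong: if_cong)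
  finally show ?thesis .
qed

lemma pivot_span:
  fixes vs :: "(nat \<Rightarrow> 'a::field) list"
  assumes len: "length ps = length vs"
    and piv: "\<And>j k. j < length vs \<Longrightarrow> k < length vs \<Longrightarrow> (vs!j) (ps!k) = (if j = k then 1 else 0)"
    and inX: "\<And>j. j < length vs \<Longrightarrow> vs!j \<in> X"
    and ls: "linsub X"
    and det: "\<And>v. v \<in> X \<Longrightarrow> (\<forall>k<length vs. v (ps!k) = 0) \<Longrightarrow> v = (\<lambda>_. 0)"
  shows "lin_indep vs" "lspan vs = X"
proof -
  show "lin_indep vs"
    unfolding lin_indep_def
  proof (intro allI impI)
    fix cs :: "'a list" and j
    assume h: "length cs = length vs \<and> lincomb vs cs = (\<lambda>_. 0)" and j: "j < length vs"
    from h have lc: "length cs = length vs" and z: "lincomb vs cs = (\<lambda>_. 0)" by auto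
    have "cs ! j = lincomb vs cs (ps ! j)" using pivot_eval[OF len lc piv j] by simp
    also have "\<dots> = 0" using z by simp
    finally show "cs ! j = 0" .
  qed
  show "lspan vs = X"
  proof
    show "lspan vs \<subseteq> X" unfolding lspan_def using lincomb_in[OF ls inX] by blast
  next
    show "X \<subseteq> lspan vs"
    proof
      fix v assume v: "v \<in> X"
      define cs where "cs = map (\<lambda>k. v (ps ! k)) [0..<length vs]"
      have lcs: "length cs = length vs" by (simp add: cs_def)
      define u where "u = lincomb vs cs"
      have uX: "u \<in> X" unfolding u_def using lincomb_in[OF ls inX] .
      have uev: "u (ps ! k) = v (ps ! k)" if "k < length vs" for k
        unfolding u_def using pivot_eval[OF len lcs piv that] that by (simp add: cs_def)
      define d where "d = (\<lambda>i. v i + (-1) * u i)"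
      have add: "\<And>a b. a \<in> X \<Longrightarrow> b \<in> X \<Longrightarrow> (\<lambda>i. a i + b i) \<in> X"
        and sm: "\<And>c a. a \<in> X \<Longrightarrow> (\<lambda>i. c * a i) \<in> X" using ls unfolding linsub_def by blast+
      have dX: "d \<in> X" unfolding d_def using add[OF v sm[OF uX, of "-1"]] .
      have "\<forall>k<length vs. d (ps ! k) = 0" using uev by (simp add: d_def)
      hence "d = (\<lambda>_. 0)" using det[OF dX] by blast
      hence "\<And>i. v i + (-1) * u i = 0" unfolding d_def by (simp add: fun_eq_iff)
      hence "v = u" by (simp add: fun_eq_iff)
      then show "v \<in> lspan vs" unfolding lspan_def u_def using lcs by blast
    qed
  qed
qed

lemma pivot_span_set:
  fixes vs :: "(nat \<Rightarrow> 'a::field) list"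
  assumes len: "length ps = length vs"
    and piv: "\<And>j k. j < length vs \<Longrightarrow> k < length vs \<Longrightarrow> (vs!j) (ps!k) = (if j = k then 1 else 0)"
    and inX: "\<And>j. j < length vs \<Longrightarrow> vs!j \<in> X"
    and ls: "linsub X"
    and det: "\<And>v. v \<in> X \<Longrightarrow> (\<forall>p\<in>set ps. v p = 0) \<Longrightarrow> v = (\<lambda>_. 0)"
  shows "lin_indep vs" "lspan vs = X"
proof -
  have det': "v = (\<lambda>_. 0)" if "v \<in> X" "\<forall>k<length vs. v (ps!k) = 0" for v
    using det[OF that(1)] that(2) len by (metis in_set_conv_nth)
  show "lin_indep vs" "lspan vs = X" using pivot_span[OF len piv inX ls det'] by blast+
qed

definition ee :: "nat \<Rightarrow> nat \<Rightarrow> 'a::field" where "ee k = (\<lambda>i. if i = k then 1 else 0)"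
definition yi :: "nat \<Rightarrow> nat \<Rightarrow> nat" where "yi n a = 2*n - 1 - a"
definition ys :: "nat \<Rightarrow> nat \<Rightarrow> nat \<Rightarrow> 'a::field" where "ys n a = ee (yi n a)"

lemma yi_eq_small[simp]: "6 \<le> n \<Longrightarrow> a < 6 \<Longrightarrow> b < 6 \<Longrightarrow> yi n a = b \<longleftrightarrow> False"
  by (simp add: yi_def)
lemma small_eq_yi[simp]: "6 \<le> n \<Longrightarrow> a < 6 \<Longrightarrow> b < 6 \<Longrightarrow> b = yi n a \<longleftrightarrow> False"
  by (simp add: yi_def)
lemma yi_inj[simp]: "a < 2*n \<Longrightarrow> b < 2*n \<Longrightarrow> yi n a = yi n b \<longleftrightarrow> a = b"
  unfolding yi_def by arith
lemma yi_lt[simp]: "a < 2*n \<Longrightarrow> yi n a < 2*n" by (simp add: yi_def)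
lemma yi_ge: "6 \<le> n \<Longrightarrow> a < 6 \<Longrightarrow> 2*n - 6 \<le> yi n a" by (simp add: yi_def)
lemma yi_yi[simp]: "a < 2*n \<Longrightarrow> 2*n - 1 - yi n a = a" by (simp add: yi_def)
lemma yi_yi'[simp]: "a < 2*n \<Longrightarrow> 2*n - Suc (yi n a) = a" by (simp add: yi_def)
lemma yi_not_mid[simp]: "6 \<le> n \<Longrightarrow> a < 6 \<Longrightarrow> yi n a < 2*n - 6 \<longleftrightarrow> False"
  by (simp add: yi_def)
lemma yi_not_ge[simp]: "a < 2*n \<Longrightarrow> 2*n \<le> yi n a \<longleftrightarrow> False"
  by (simp add: yi_def)

lemma ee_apply: "ee k i = (if i = k then 1 else 0)" by (simp add: ee_def)

lemma bform_ee2: "k < 2*n \<Longrightarrow> bform n u (ee k) = u (2*n - 1 - k)"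
proof -
  assume k: "k < 2*n"
  have "bform n u (ee k) = (\<Sum>i<2*n. if i = 2*n-1-k then u i else 0)"
    unfolding bform_def ee_def using k by (intro sum.cong) auto
  also have "\<dots> = u (2*n-1-k)" using k by simp
  finally show ?thesis .
qed

lemma bform_sym: "bform n u v = bform n v u"
proof -
  have "bform n u v = (\<Sum>i<2*n. u i * v (2*n - 1 - i))" by (simp add: bform_def)
  also have "\<dots> = (\<Sum>i<2*n. u (2*n - 1 - i) * v (2*n - 1 - (2*n - 1 - i)))"
    by (rule sum.reindex_bij_witness[of _ "\<lambda>i. 2*n-1-i" "\<lambda>i. 2*n-1-i"]) auto
  also have "\<dots> = (\<Sum>i<2*n. v i * u (2*n - 1 - i))"
    by (intro sum.cong) (auto simp: mult.commute)
  finally show ?thesis by (simp add: bform_def)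
qed

lemma bform_ee1: "k < 2*n \<Longrightarrow> bform n (ee k) v = v (2*n - 1 - k)"
  by (subst bform_sym) (rule bform_ee2)

lemma bform_ys2: "a < 2*n \<Longrightarrow> bform n u (ys n a) = u a"
  by (simp add: ys_def bform_ee2)
lemma bform_ys1: "a < 2*n \<Longrightarrow> bform n (ys n a) v = v a"
  by (simp add: ys_def bform_ee1)

lemma bform_add2: "bform n u (\<lambda>i. v i + w i) = bform n u v + bform n u w"
  by (simp add: bform_def sum.distrib distrib_left)
lemma bform_diff2: "bform n u (\<lambda>i. v i - w i) = bform n u v - bform n u w"
  by (simp add: bform_def sum_subtractf right_diff_distrib)
lemma bform_smult2: "bform n u (\<lambda>i. c * v i) = c * bform n u v"
  by (simp add: bform_def sum_distrib_left mult.left_commute)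
lemma bform_add1: "bform n (\<lambda>i. v i + w i) u = bform n v u + bform n w u"
  by (simp add: bform_def sum.distrib distrib_right)
lemma bform_diff1: "bform n (\<lambda>i. v i - w i) u = bform n v u - bform n w u"
  by (simp add: bform_def sum_subtractf left_diff_distrib)
lemma bform_smult1: "bform n (\<lambda>i. c * v i) u = c * bform n v u"
  by (simp add: bform_def sum_distrib_left mult.assoc)

lemma bform_split:
  assumes "6 \<le> n"
  shows "bform n u v = (\<Sum>a<6. u a * v (yi n a)) + (\<Sum>a<6. u (yi n a) * v a)
      + (\<Sum>i\<in>{6..<2*n-6}. u i * v (2*n-1-i))"
proof -
  have e1: "{..<2*n} = {..<6} \<union> {6..<2*n-6} \<union> {2*n-6..<2*n}" using assms by auto
  have "bform n u v = (\<Sum>i\<in>{..<6} \<union> {6..<2*n-6} \<union> {2*n-6..<2*n}. u i * v (2*n-1-i))"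
    unfolding bform_def e1 ..
  also have "\<dots> = (\<Sum>i<6. u i * v (2*n-1-i)) + (\<Sum>i\<in>{6..<2*n-6}. u i * v (2*n-1-i))
       + (\<Sum>i\<in>{2*n-6..<2*n}. u i * v (2*n-1-i))"
  proof -
    have d1: "({..<6} \<union> {6..<2*n-6}) \<inter> {2*n-6..<2*n} = {}" "{..<6} \<inter> {6..<2*n-6} = ({}::nat set)" using assms by auto
    show ?thesis
      apply (subst sum.union_disjoint) using d1 apply auto[3]
      apply (subst sum.union_disjoint) using d1 by auto
  qed
  also have "(\<Sum>i\<in>{2*n-6..<2*n}. u i * v (2*n-1-i)) = (\<Sum>a<6. u (yi n a) * v a)"
    using assms
    by (intro sum.reindex_bij_witness[of _ "\<lambda>a. 2*n-1-a" "\<lambda>i. 2*n-1-i"]) (auto simp: yi_def)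
  finally show ?thesis by (simp add: yi_def add.commute add.left_commute)
qed

lemma idx_cases:
  assumes "6 \<le> n" "i < 2*n"
  obtains "i < 6" | "6 \<le> i" "i < 2*n-6" | a where "a < 6" "i = yi n a"
proof -
  consider "i < 6" | "6 \<le> i \<and> i < 2*n-6" | "2*n-6 \<le> i" by linarith
  then show ?thesis
  proof cases
    case 3
    then have "2*n-1-i < 6" "i = yi n (2*n-1-i)" using assms by (auto simp: yi_def)
    then show ?thesis using that by blast
  qed (use that in auto)
qed

definition gset :: "nat \<Rightarrow> ((nat \<Rightarrow> 'a::field) \<Rightarrow> bool) \<Rightarrow> ((nat \<Rightarrow> 'a) \<Rightarrow> bool) \<Rightarrow> nat set \<Rightarrow> (nat \<Rightarrow> 'a) set" where
  "gset n P Q K = {v. (\<forall>i. 2*n \<le> i \<longrightarrow> v i = 0) \<and> P v \<and> Q (\<lambda>a. v (yi n a))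
      \<and> (\<forall>i. 6 \<le> i \<longrightarrow> i < 2*n-6 \<longrightarrow> i \<notin> K \<longrightarrow> v i = 0)}"

definition linP :: "((nat \<Rightarrow> 'a::field) \<Rightarrow> bool) \<Rightarrow> bool" where
  "linP P \<longleftrightarrow> P (\<lambda>_. 0) \<and> (\<forall>u v. P u \<longrightarrow> P v \<longrightarrow> P (\<lambda>i. u i + v i)) \<and> (\<forall>c u. P u \<longrightarrow> P (\<lambda>i. c * u i))"

lemma linsub_gset: "linP P \<Longrightarrow> linP Q \<Longrightarrow> linsub (gset n P Q K)"
  unfolding linsub_def gset_def linP_def by auto

lemma gset_vecs: "gset n P Q K \<subseteq> vecs n"
  unfolding gset_def vecs_def by auto

lemma gset_mem: "v \<in> gset n P Q K \<longleftrightarrow> (\<forall>i. 2*n \<le> i \<longrightarrow> v i = 0) \<and> P v \<and> Q (\<lambda>a. v (yi n a))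
      \<and> (\<forall>i. 6 \<le> i \<longrightarrow> i < 2*n-6 \<longrightarrow> i \<notin> K \<longrightarrow> v i = 0)"
  unfolding gset_def by simp

lemma gset_pad_zero:
  assumes "6 \<le> n" "u \<in> gset n P Q K" "v \<in> gset n P' Q' K'" "K \<subseteq> {6..<n}" "K' \<subseteq> {6..<n}"
  shows "(\<Sum>i\<in>{6..<2*n-6}. u i * v (2*n-1-i)) = 0"
proof (rule sum.neutral, rule ballI)
  fix i assume i: "i \<in> {6..<2*n-6}"
  show "u i * v (2*n-1-i) = 0"
  proof (cases "i < n")
    case True
    then have ge: "n \<le> 2*n-1-i" by arith
    then have "2*n-1-i \<notin> K'" using assms(5) by auto
    moreover have "6 \<le> 2*n-1-i" "2*n-1-i < 2*n-6" using i ge assms(1) by auto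
    ultimately have "v (2*n-1-i) = 0" using assms(3) unfolding gset_def by blast
    then show ?thesis by simp
  next
    case False
    then have "i \<notin> K" using assms(4) by auto
    then have "u i = 0" using assms(2) i unfolding gset_def by auto
    then show ?thesis by simp
  qed
qed

lemma gset_iso:
  assumes "6 \<le> n" "u \<in> gset n P Q K" "v \<in> gset n P' Q' K'" "K \<subseteq> {6..<n}" "K' \<subseteq> {6..<n}"
  shows "bform n u v = (\<Sum>a<6. u a * v (yi n a)) + (\<Sum>a<6. u (yi n a) * v a)"
  using bform_split[OF assms(1), of u v] gset_pad_zero[OF assms] by simp

lemma gset_zero:
  assumes "6 \<le> n" "v \<in> gset n P Q K"
    and "\<And>a. a < 6 \<Longrightarrow> v a = 0" "\<And>a. a < 6 \<Longrightarrow> v (yi n a) = 0" "\<And>i. i \<in> K \<Longrightarrow> v i = 0"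
  shows "v = (\<lambda>_. 0)"
proof
  fix i
  show "v i = 0"
  proof (cases "i < 2*n")
    case True
    then show ?thesis
    proof (cases rule: idx_cases[OF assms(1) True])
      case 2
      then show ?thesis using assms(2,5) unfolding gset_def by (cases "i \<in> K") auto
    qed (use assms in auto)
  next
    case False then show ?thesis using assms(2) unfolding gset_def by auto
  qed
qed

lemma less6_cases: "(a::nat) < 6 \<Longrightarrow> a = 0 \<or> a = 1 \<or> a = 2 \<or> a = 3 \<or> a = 4 \<or> a = 5" by auto

lemma sum6: "(\<Sum>a<6. (f::nat\<Rightarrow>'a) a) = f 0 + f 1 + f 2 + f 3 + f 4 + (f 5 :: 'a::comm_monoid_add)"
  by (simp add: eval_nat_numeral add.assoc)

lemma pivot_append:
  fixes cs :: "(nat \<Rightarrow> 'a::field) list"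
  assumes "length cp = length cs"
    and "\<And>j k. j < length cs \<Longrightarrow> k < length cs \<Longrightarrow> (cs!j) (cp!k) = (if j=k then 1 else 0)"
    and "\<And>j i. j < length cs \<Longrightarrow> i \<in> set P \<Longrightarrow> (cs!j) i = 0"
    and "\<And>k. k < length cs \<Longrightarrow> cp!k \<notin> set P"
    and "distinct P"
    and "j < length (cs @ map ee P)" "k < length (cs @ map ee P)"
  shows "((cs @ map ee P)!j) ((cp @ P)!k) = (if j=k then 1 else 0)"
proof -
  consider "j < length cs" "k < length cs" | "j < length cs" "\<not> k < length cs"
    | "\<not> j < length cs" "k < length cs" | "\<not> j < length cs" "\<not> k < length cs" by blast
  then show ?thesis
  proof cases
    case 1 then show ?thesis using assms(1,2) by (simp add: nth_append)
  next
    case 2 then show ?thesis using assms(1,3,6,7) by (auto simp: nth_append)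
  next
    case 3
    then have "cp ! k \<noteq> P ! (j - length cs)" using assms(4)[of k] assms(6) by auto
    then show ?thesis using 3 assms(1,6) by (auto simp: nth_append ee_def)
  next
    case 4
    then have "(P ! (j - length cs) = P ! (k - length cs)) = (j = k)"
      using assms(1,5,6,7) by (auto simp: nth_eq_iff_index_eq)
    then show ?thesis using 4 assms(1,6,7) by (auto simp: nth_append ee_def)
  qed
qed

definition PS :: "'a \<Rightarrow> (nat \<Rightarrow> 'a::field) \<Rightarrow> bool" where
  "PS r v \<longleftrightarrow> v 0 = 0 \<and> v 4 = v 1 + v 2 + r * v 3 \<and> v 5 = v 1"
definition QS :: "'a \<Rightarrow> (nat \<Rightarrow> 'a::field) \<Rightarrow> bool" where
  "QS r c \<longleftrightarrow> c 2 = - c 4 \<and> c 3 = - (r * c 4) \<and> c 1 = - c 4 - c 5"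
definition Lset :: "nat \<Rightarrow> 'a \<Rightarrow> (nat \<Rightarrow> 'a::field) set" where
  "Lset n r = gset n (PS r) (QS r) {6..<n}"
definition bLc :: "nat \<Rightarrow> 'a \<Rightarrow> (nat \<Rightarrow> 'a::field) list" where
  "bLc n r = [(\<lambda>i. ee 1 i + ee 4 i + ee 5 i), (\<lambda>i. ee 2 i + ee 4 i), (\<lambda>i. ee 3 i + r * ee 4 i), ys n 0,
     (\<lambda>i. ys n 4 i - ys n 1 i - ys n 2 i - r * ys n 3 i), (\<lambda>i. ys n 5 i - ys n 1 i)]"
definition pLc :: "nat \<Rightarrow> nat list" where "pLc n = [1, 2, 3, yi n 0, yi n 4, yi n 5]"

lemma linP_PS: "linP (PS r)" unfolding linP_def PS_def by (auto simp: algebra_simps; algebra)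
lemma linP_QS: "linP (QS r)" unfolding linP_def QS_def by (auto simp: algebra_simps; algebra)

lemma yi_big: "6 \<le> n \<Longrightarrow> a < 6 \<Longrightarrow> i < n \<Longrightarrow> yi n a = i \<longleftrightarrow> False"
  by (simp add: yi_def)

lemma bLc_piv:
  assumes n: "6 \<le> n" and j: "j < 6" and k: "k < 6"
  shows "(bLc n r ! j) (pLc n ! k) = (if j = k then 1 else 0)"
  using less6_cases[OF j] less6_cases[OF k] n
  by (elim disjE) (simp_all add: bLc_def pLc_def ys_def ee_def)

lemma yi_ge_n: "6 \<le> n \<Longrightarrow> a < 6 \<Longrightarrow> n \<le> yi n a" by (simp add: yi_def)
lemma yi_lt_n[simp]: "6 \<le> n \<Longrightarrow> a < 6 \<Longrightarrow> yi n a < n \<longleftrightarrow> False" by (simp add: yi_def)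

lemma bLc_pad: assumes "6 \<le> n" "j < 6" "6 \<le> i" "i < n" shows "(bLc n r ! j) i = 0"
proof -
  have "i \<noteq> yi n a" if "a < 6" for a using yi_ge_n[OF assms(1) that] assms(4) by simp
  then show ?thesis using less6_cases[OF assms(2)] assms(3)
    by (elim disjE) (simp_all add: bLc_def ys_def ee_def)
qed

lemma pLc_notpad: assumes "6 \<le> n" "k < 6" shows "pLc n ! k \<notin> set [6..<n]"
  using less6_cases[OF assms(2)] assms(1)
  by (elim disjE) (simp_all add: pLc_def)

definition bL :: "nat \<Rightarrow> 'a \<Rightarrow> (nat \<Rightarrow> 'a::field) list" where "bL n r = bLc n r @ map ee [6..<n]"
definition pL :: "nat \<Rightarrow> nat list" where "pL n = pLc n @ [6..<n]"

lemma len_bLc: "length (bLc n r) = 6" by (simp add: bLc_def)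
lemma len_pLc: "length (pLc n) = 6" by (simp add: pLc_def)
lemma len_bL: "6 \<le> n \<Longrightarrow> length (bL n r) = n" by (simp add: bL_def bLc_def)
lemma len_pL: "6 \<le> n \<Longrightarrow> length (pL n) = n" by (simp add: pL_def pLc_def)

lemma bL_piv: assumes "6 \<le> n" "j < length (bL n r)" "k < length (bL n r)"
  shows "(bL n r ! j) (pL n ! k) = (if j = k then 1 else 0)"
  unfolding bL_def pL_def
  apply (rule pivot_append)
  subgoal by (simp add: len_bLc len_pLc)
  subgoal for j k by (simp add: len_bLc bLc_piv[OF assms(1)])
  subgoal for j i using bLc_pad[OF assms(1), of j i r] by (simp add: len_bLc)
  subgoal for k using pLc_notpad[OF assms(1)] by (simp add: len_bLc)
  subgoal by simp
  using assms(2,3) by (simp_all add: bL_def)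

lemma yi_inj6[simp]: "6 \<le> n \<Longrightarrow> a < 6 \<Longrightarrow> b < 6 \<Longrightarrow> (yi n a = yi n b) = (a = b)"
  unfolding yi_def by arith
lemma yi_eq_big[simp]: "2*n \<le> i \<Longrightarrow> a < 6 \<Longrightarrow> 6 \<le> n \<Longrightarrow> (i = yi n a) = False"
  by (simp add: yi_def)
lemma yi_eq_mid[simp]: "6 \<le> n \<Longrightarrow> a < 6 \<Longrightarrow> i < 2*n-6 \<Longrightarrow> (i = yi n a) = False"
  by (simp add: yi_def)

lemma bLc_in: assumes n: "6 \<le> n" and j: "j < 6" shows "bLc n r ! j \<in> Lset n r"
  unfolding Lset_def gset_mem
proof (intro conjI allI impI)
  let ?v = "bLc n r ! j"
  show "?v i = 0" if "2*n \<le> i" for i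
    using less6_cases[OF j] that n by (elim disjE) (simp_all add: bLc_def ys_def ee_def)
  show "?v i = 0" if "6 \<le> i" "i < 2*n-6" "i \<notin> {6..<n}" for i
    using less6_cases[OF j] that n by (elim disjE) (simp_all add: bLc_def ys_def ee_def)
  show "PS r ?v"
    using less6_cases[OF j] n by (elim disjE) (simp_all add: bLc_def ys_def ee_def PS_def)
  show "QS r (\<lambda>a. ?v (yi n a))"
    using less6_cases[OF j] n by (elim disjE) (simp_all add: bLc_def ys_def ee_def QS_def)
qed

lemma eepad_in_L: assumes n: "6 \<le> n" and k: "6 \<le> k" "k < n" shows "ee k \<in> Lset n r"
  unfolding Lset_def gset_mem
proof (intro conjI allI impI)
  show "ee k i = 0" if "2*n \<le> i" for i using that k by (simp add: ee_def)
  show "ee k i = 0" if "6 \<le> i" "i < 2*n-6" "i \<notin> {6..<n}" for i using that k by (auto simp: ee_def)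
  show "PS r (ee k)" using k by (simp add: ee_def PS_def)
  show "QS r (\<lambda>a. ee k (yi n a))" using k n yi_big[OF n] by (simp add: ee_def QS_def)
qed

lemma bL_in: assumes n: "6 \<le> n" and j: "j < length (bL n r)" shows "bL n r ! j \<in> Lset n r"
proof (cases "j < 6")
  case True then show ?thesis using bLc_in[OF n True] by (simp add: bL_def nth_append len_bLc)
next
  case False
  then have "bL n r ! j = ee (6 + (j - 6))" using j by (simp add: bL_def nth_append len_bLc)
  then show ?thesis using eepad_in_L[OF n, of j r] j False len_bL[OF n, of r] by simp
qed

lemma set_pL: "set (pL n) = {1,2,3,yi n 0, yi n 4, yi n 5} \<union> {6..<n}"
  by (auto simp: pL_def pLc_def)

lemma L_det: assumes n: "6 \<le> n" and v: "v \<in> Lset n r" and z: "\<forall>p\<in>set (pL n). v p = 0"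
  shows "v = (\<lambda>_. 0)"
proof -
  have ps: "PS r v" and qs: "QS r (\<lambda>a. v (yi n a))" using v unfolding Lset_def gset_mem by auto
  have z1: "v 1 = 0" "v 2 = 0" "v 3 = 0" "v (yi n 0) = 0" "v (yi n 4) = 0" "v (yi n 5) = 0"
    and zp: "\<And>i. i \<in> {6..<n} \<Longrightarrow> v i = 0" using z by (auto simp: set_pL)
  show ?thesis
  proof (rule gset_zero[OF n v[unfolded Lset_def]])
    show "v a = 0" if "a < 6" for a using less6_cases[OF that] ps z1 by (auto simp: PS_def)
    show "v (yi n a) = 0" if "a < 6" for a using less6_cases[OF that] qs z1 by (auto simp: QS_def)
    show "v i = 0" if "i \<in> {6..<n}" for i using zp that .
  qed
qed

lemma L_linsub: "linsub (Lset n r)" unfolding Lset_def by (rule linsub_gset[OF linP_PS linP_QS])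

lemma L_span: assumes n: "6 \<le> n" shows "lin_indep (bL n r)" "lspan (bL n r) = Lset n r"
proof -
  have l: "length (pL n) = length (bL n r)" using len_bL[OF n, of r] len_pL[OF n] by simp
  show "lin_indep (bL n r)" "lspan (bL n r) = Lset n r"
    by (rule pivot_span_set[OF l bL_piv[OF n] bL_in[OF n] L_linsub L_det[OF n]], assumption+)+
qed

lemma L_vecs: "Lset n r \<subseteq> vecs n" unfolding Lset_def by (rule gset_vecs)

lemma L_dim: assumes n: "6 \<le> n" shows "subspace_dim n (Lset n r) n"
proof -
  have s: "set (bL n r) \<subseteq> vecs n"
  proof
    fix v assume "v \<in> set (bL n r)"
    then obtain j where "j < length (bL n r)" "v = bL n r ! j" by (auto simp: in_set_conv_nth)
    then show "v \<in> vecs n" using bL_in[OF n] L_vecs by blast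
  qed
  show ?thesis unfolding subspace_dim_def
    using s L_span[OF n, of r] len_bL[OF n, of r] by blast
qed

lemma L_iso: assumes n: "6 \<le> n" shows "isotropic n (Lset n r)"
  unfolding isotropic_def
proof (intro ballI)
  fix u v assume u: "u \<in> Lset n r" and v: "v \<in> Lset n r"
  have "bform n u v = (\<Sum>a<6. u a * v (yi n a)) + (\<Sum>a<6. u (yi n a) * v a)"
    using gset_iso[OF n u[unfolded Lset_def] v[unfolded Lset_def]] by simp
  also have "\<dots> = 0"
  proof -
    have pu: "PS r u" "QS r (\<lambda>a. u (yi n a))" "PS r v" "QS r (\<lambda>a. v (yi n a))"
      using u v unfolding Lset_def gset_mem by auto
    then show ?thesis unfolding sum6 PS_def QS_def
      by (elim conjE) (simp add: algebra_simps; algebra)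
  qed
  finally show "bform n u v = 0" .
qed

definition PT :: "(nat \<Rightarrow> 'a::field) \<Rightarrow> bool" where
  "PT v \<longleftrightarrow> v 0 = 0 \<and> v 1 = 0 \<and> v 2 = 0 \<and> v 3 = 0"
definition QT :: "(nat \<Rightarrow> 'a::field) \<Rightarrow> bool" where
  "QT c \<longleftrightarrow> c 4 = 0 \<and> c 5 = 0 \<and> c 3 = - c 1 \<and> c 2 = - c 0 - c 1"
definition Wset :: "nat \<Rightarrow> nat \<Rightarrow> (nat \<Rightarrow> 'a::field) set" where
  "Wset n \<beta> = gset n PT QT {6..<\<beta>+2}"
definition bWc :: "nat \<Rightarrow> (nat \<Rightarrow> 'a::field) list" where
  "bWc n = [ee 4, ee 5, (\<lambda>i. ys n 0 i - ys n 2 i), (\<lambda>i. ys n 1 i - ys n 2 i - ys n 3 i)]"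
definition pWc :: "nat \<Rightarrow> nat list" where "pWc n = [4, 5, yi n 0, yi n 1]"
definition bW :: "nat \<Rightarrow> nat \<Rightarrow> (nat \<Rightarrow> 'a::field) list" where "bW n \<beta> = bWc n @ map ee [6..<\<beta>+2]"
definition pW :: "nat \<Rightarrow> nat \<Rightarrow> nat list" where "pW n \<beta> = pWc n @ [6..<\<beta>+2]"

lemma linP_PT: "linP PT" unfolding linP_def PT_def by auto
lemma linP_QT: "linP QT" unfolding linP_def QT_def by (auto simp: algebra_simps; algebra)

lemma less4_cases: "(a::nat) < 4 \<Longrightarrow> a = 0 \<or> a = 1 \<or> a = 2 \<or> a = 3" by auto

lemma len_bWc: "length (bWc n) = 4" by (simp add: bWc_def)
lemma len_pWc: "length (pWc n) = 4" by (simp add: pWc_def)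
lemma len_bW: "4 \<le> \<beta> \<Longrightarrow> length (bW n \<beta>) = \<beta>" by (simp add: bW_def bWc_def del: upt_Suc)
lemma len_pW: "4 \<le> \<beta> \<Longrightarrow> length (pW n \<beta>) = \<beta>" by (simp add: pW_def pWc_def del: upt_Suc)

lemma bWc_piv: assumes n: "6 \<le> n" and j: "j < 4" and k: "k < 4"
  shows "(bWc n ! j) (pWc n ! k) = (if j = k then 1 else 0)"
  using less4_cases[OF j] less4_cases[OF k] n
  by (elim disjE) (simp_all add: bWc_def pWc_def ys_def ee_def)

lemma bWc_pad: assumes "6 \<le> n" "j < 4" "6 \<le> i" "i < n" shows "(bWc n ! j) i = 0"
proof -
  have "i \<noteq> yi n a" if "a < 6" for a using yi_ge_n[OF assms(1) that] assms(4) by simp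
  then show ?thesis using less4_cases[OF assms(2)] assms(3)
    by (elim disjE) (simp_all add: bWc_def ys_def ee_def)
qed

lemma pWc_notpad: assumes "6 \<le> n" "k < 4" shows "pWc n ! k \<notin> set [6..<n]"
  using less4_cases[OF assms(2)] assms(1)
  by (elim disjE) (simp_all add: pWc_def)

lemma bW_piv: assumes n: "6 \<le> n" and b: "\<beta> + 2 \<le> n" "4 \<le> \<beta>" and jk: "j < length (bW n \<beta> :: (nat \<Rightarrow> 'a::field) list)" "k < length (bW n \<beta> :: (nat \<Rightarrow> 'a) list)"
  shows "((bW n \<beta> :: (nat \<Rightarrow> 'a) list) ! j) (pW n \<beta> ! k) = (if j = k then 1 else 0)"
  unfolding bW_def pW_def
  apply (rule pivot_append)
  subgoal by (simp add: len_bWc len_pWc)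
  subgoal for j k by (simp add: len_bWc bWc_piv[OF n])
  subgoal for j i using bWc_pad[OF n, of j i] b by (simp add: len_bWc del: upt_Suc)
  subgoal for k using pWc_notpad[OF n, of k] b by (auto simp: len_bWc simp del: upt_Suc)
  subgoal by simp
  using jk by (simp_all add: bW_def del: upt_Suc)

lemma bWc_in: assumes n: "6 \<le> n" and j: "j < 4" shows "bWc n ! j \<in> Wset n \<beta>"
  unfolding Wset_def gset_mem
proof (intro conjI allI impI)
  let ?v = "bWc n ! j"
  show "?v i = 0" if "2*n \<le> i" for i
    using less4_cases[OF j] that n by (elim disjE) (simp_all add: bWc_def ys_def ee_def)
  show "?v i = 0" if "6 \<le> i" "i < 2*n-6" "i \<notin> {6..<\<beta>+2}" for i
    using less4_cases[OF j] that n by (elim disjE) (simp_all add: bWc_def ys_def ee_def)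
  show "PT ?v"
    using less4_cases[OF j] n by (elim disjE) (simp_all add: bWc_def ys_def ee_def PT_def)
  show "QT (\<lambda>a. ?v (yi n a))"
    using less4_cases[OF j] n by (elim disjE) (simp_all add: bWc_def ys_def ee_def QT_def)
qed

lemma eepad_in_W: assumes n: "6 \<le> n" and k: "6 \<le> k" "k < \<beta> + 2" "\<beta> + 2 \<le> n" shows "ee k \<in> Wset n \<beta>"
  unfolding Wset_def gset_mem
proof (intro conjI allI impI)
  show "ee k i = 0" if "2*n \<le> i" for i using that k by (simp add: ee_def)
  show "ee k i = 0" if "6 \<le> i" "i < 2*n-6" "i \<notin> {6..<\<beta>+2}" for i using that k by (auto simp: ee_def)
  show "PT (ee k)" using k by (simp add: ee_def PT_def)
  show "QT (\<lambda>a. ee k (yi n a))" using k n yi_big[OF n, of _ k] by (simp add: ee_def QT_def)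
qed

lemma bW_in: assumes n: "6 \<le> n" and b: "\<beta> + 2 \<le> n" "4 \<le> \<beta>" and j: "j < length (bW n \<beta> :: (nat \<Rightarrow> 'a::field) list)"
  shows "(bW n \<beta> :: (nat \<Rightarrow> 'a) list) ! j \<in> Wset n \<beta>"
proof (cases "j < 4")
  case True then show ?thesis using bWc_in[OF n True] by (simp add: bW_def nth_append len_bWc)
next
  case False
  then have eq: "(bW n \<beta> :: (nat \<Rightarrow> 'a) list) ! j = ee (6 + (j - 4))" using j by (simp add: bW_def nth_append len_bWc del: upt_Suc)
  have jb: "j < \<beta>" using j len_bW[where 'a='a, OF b(2), of n] by simp
  have "ee (6 + (j - 4)) \<in> (Wset n \<beta> :: (nat \<Rightarrow> 'a) set)"
    by (rule eepad_in_W[OF n]) (use jb False b in auto)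
  then show ?thesis using eq by simp
qed

lemma set_pW: "set (pW n \<beta>) = {4,5,yi n 0, yi n 1} \<union> {6..<\<beta>+2}"
  by (auto simp: pW_def pWc_def simp del: upt_Suc)

lemma W_det: assumes n: "6 \<le> n" and v: "v \<in> Wset n \<beta>" and z: "\<forall>p\<in>set (pW n \<beta>). v p = 0"
  shows "v = (\<lambda>_. 0)"
proof -
  have ps: "PT v" and qs: "QT (\<lambda>a. v (yi n a))" using v unfolding Wset_def gset_mem by auto
  have z1: "v 4 = 0" "v 5 = 0" "v (yi n 0) = 0" "v (yi n 1) = 0"
    and zp: "\<And>i. i \<in> {6..<\<beta>+2} \<Longrightarrow> v i = 0" using z by (auto simp: set_pW)
  show ?thesis
  proof (rule gset_zero[OF n v[unfolded Wset_def]])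
    show "v a = 0" if "a < 6" for a using less6_cases[OF that] ps z1 by (auto simp: PT_def)
    show "v (yi n a) = 0" if "a < 6" for a using less6_cases[OF that] qs z1 by (auto simp: QT_def)
    show "v i = 0" if "i \<in> {6..<\<beta>+2}" for i using zp that .
  qed
qed

lemma W_linsub: "linsub (Wset n \<beta>)" unfolding Wset_def by (rule linsub_gset[OF linP_PT linP_QT])
lemma W_vecs: "Wset n \<beta> \<subseteq> vecs n" unfolding Wset_def by (rule gset_vecs)

lemma W_dim: assumes n: "6 \<le> n" and b: "\<beta> + 2 \<le> n" "4 \<le> \<beta>" shows "subspace_dim n (Wset n \<beta> :: (nat \<Rightarrow> 'a::field) set) \<beta>"
proof -
  have l: "length (pW n \<beta>) = length (bW n \<beta> :: (nat \<Rightarrow> 'a::field) list)" using len_bW[where 'a='a, OF b(2), of n] len_pW[OF b(2), of n] by simp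
  have sp: "lin_indep (bW n \<beta> :: (nat \<Rightarrow> 'a) list)" "lspan (bW n \<beta> :: (nat \<Rightarrow> 'a) list) = Wset n \<beta>"
    by (rule pivot_span_set[OF l bW_piv[OF n b] bW_in[OF n b] W_linsub W_det[OF n]], assumption+)+
  have s: "set (bW n \<beta> :: (nat \<Rightarrow> 'a) list) \<subseteq> vecs n"
  proof
    fix v assume "v \<in> set (bW n \<beta> :: (nat \<Rightarrow> 'a) list)"
    then obtain j where "j < length (bW n \<beta> :: (nat \<Rightarrow> 'a) list)" "v = bW n \<beta> ! j" by (auto simp: in_set_conv_nth)
    then show "v \<in> vecs n" using bW_in[OF n b] W_vecs by blast
  qed
  show ?thesis unfolding subspace_dim_def
    using s sp len_bW[where 'a='a, OF b(2), of n] by blast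
qed

lemma W_iso: assumes n: "6 \<le> n" and b: "\<beta> + 2 \<le> n" shows "isotropic n (Wset n \<beta> :: (nat \<Rightarrow> 'a::field) set)"
  unfolding isotropic_def
proof (intro ballI)
  fix u v :: "nat \<Rightarrow> 'a" assume u: "u \<in> Wset n \<beta>" and v: "v \<in> Wset n \<beta>"
  have "bform n u v = (\<Sum>a<6. u a * v (yi n a)) + (\<Sum>a<6. u (yi n a) * v a)"
    using gset_iso[OF n u[unfolded Wset_def] v[unfolded Wset_def]] b by simp
  also have "\<dots> = 0"
  proof -
    have pu: "PT u" "QT (\<lambda>a. u (yi n a))" "PT v" "QT (\<lambda>a. v (yi n a))"
      using u v unfolding Wset_def gset_mem by auto
    then show ?thesis unfolding sum6 PT_def QT_def by simp
  qed
  finally show "bform n u v = 0" .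
qed

definition PU :: "nat \<Rightarrow> (nat \<Rightarrow> 'a::field) \<Rightarrow> bool" where "PU a v \<longleftrightarrow> (\<forall>b<6. a \<le> b \<longrightarrow> v b = 0)"
definition QU :: "nat \<Rightarrow> (nat \<Rightarrow> 'a::field) \<Rightarrow> bool" where "QU k c \<longleftrightarrow> (\<forall>b<6. b + k < 5 \<longrightarrow> c b = 0)"
definition Uset :: "nat \<Rightarrow> nat \<Rightarrow> nat \<Rightarrow> nat \<Rightarrow> (nat \<Rightarrow> 'a::field) set" where
  "Uset n a k p = gset n (PU a) (QU k) {6..<6+p}"
definition idxU :: "nat \<Rightarrow> nat \<Rightarrow> nat \<Rightarrow> nat \<Rightarrow> nat list" where
  "idxU n a k p = [0..<a] @ map (yi n) [5-k..<6] @ [6..<6+p]"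

lemma linP_PU: "linP (PU a)" unfolding linP_def PU_def by auto
lemma linP_QU: "linP (QU k)" unfolding linP_def QU_def by auto
lemma U_linsub: "linsub (Uset n a k p)" unfolding Uset_def by (rule linsub_gset[OF linP_PU linP_QU])
lemma U_vecs: "Uset n a k p \<subseteq> vecs n" unfolding Uset_def by (rule gset_vecs)

lemma len_idxU: "k \<le> 5 \<Longrightarrow> length (idxU n a k p) = a + (k + 1) + p"
  by (simp add: idxU_def del: upt_Suc)

lemma set_idxU: "set (idxU n a k p) = {0..<a} \<union> yi n ` {5-k..<6} \<union> {6..<6+p}"
  by (simp add: idxU_def Un_assoc del: upt_Suc)

lemma distinct_idxU:
  assumes n: "6 \<le> n" and a: "a \<le> 6" and p: "6 + p \<le> n"
  shows "distinct (idxU n a k p)"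
proof -
  have inj: "inj_on (yi n) {5-k..<6}"
  proof (rule inj_onI)
    fix x y assume "x \<in> {5-k..<6}" "y \<in> {5-k..<6}" "yi n x = yi n y"
    then show "x = y" using yi_inj6[OF n, of x y] by simp
  qed
  have y6: "6 \<le> yi n b \<and> n \<le> yi n b" if "b < 6" for b using yi_ge_n[OF n that] n by simp
  have h1: "\<forall>x\<in>set [0..<a]. x < 6" using a by (simp del: upt_Suc)
  have h2: "\<forall>x\<in>set (map (yi n) [5-k..<6] @ [6..<6+p]). 6 \<le> x"
  proof
    fix x assume "x \<in> set (map (yi n) [5-k..<6] @ [6..<6+p])"
    then consider b where "b < 6" "x = yi n b" | "x \<in> set [6..<6+p]" by (auto simp del: upt_Suc)
    then show "6 \<le> x" using y6 by cases (auto simp del: upt_Suc)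
  qed
  have d1: "set [0..<a] \<inter> set (map (yi n) [5-k..<6] @ [6..<6+p]) = {}"
  proof (rule equals0I)
    fix x assume x: "x \<in> set [0..<a] \<inter> set (map (yi n) [5-k..<6] @ [6..<6+p])"
    have "x < 6" using bspec[OF h1 IntD1[OF x]] .
    moreover have "6 \<le> x" using bspec[OF h2 IntD2[OF x]] .
    ultimately show False by simp
  qed
  have h3: "\<forall>x\<in>set (map (yi n) [5-k..<6]). n \<le> x"
  proof
    fix x assume "x \<in> set (map (yi n) [5-k..<6])"
    then obtain b where "b < 6" "x = yi n b" by (auto simp del: upt_Suc)
    then show "n \<le> x" using y6 by simp
  qed
  have h4: "\<forall>x\<in>set [6..<6+p]. x < n" using p by (simp del: upt_Suc)
  have d2: "set (map (yi n) [5-k..<6]) \<inter> set [6..<6+p] = {}"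
  proof (rule equals0I)
    fix x assume x: "x \<in> set (map (yi n) [5-k..<6]) \<inter> set [6..<6+p]"
    have "n \<le> x" using bspec[OF h3 IntD1[OF x]] .
    moreover have "x < n" using bspec[OF h4 IntD2[OF x]] .
    ultimately show False by simp
  qed
  have "distinct (map (yi n) [5-k..<6])" using inj by (simp add: distinct_map del: upt_Suc)
  then show ?thesis unfolding idxU_def using d1 d2 by (simp del: upt_Suc)
qed

lemma map_ee_piv:
  assumes "distinct P" "j < length P" "k < length P"
  shows "(map ee P ! j) (P ! k) = (if j = k then (1::'a::field) else 0)"
  using pivot_append[of "[]" "[]" P j k] assms by simp

lemma ee_idx_in_U:
  assumes n: "6 \<le> n" and a: "a \<le> 6" and p: "6 + p \<le> n" and i: "i \<in> set (idxU n a k p)"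
  shows "ee i \<in> Uset n a k p"
proof -
  consider "i < a" | b where "5 - k \<le> b" "b < 6" "i = yi n b" | "6 \<le> i" "i < 6 + p"
    using i unfolding set_idxU by (auto simp del: upt_Suc)
  then show ?thesis
  proof cases
    case 1
    then show ?thesis unfolding Uset_def gset_mem PU_def QU_def using a n
      by (auto simp: ee_def)
  next
    case 2
    show ?thesis unfolding Uset_def gset_mem PU_def QU_def
    proof (intro conjI allI impI)
      show "ee i j = 0" if "2*n \<le> j" for j using that 2 n by (simp add: ee_def)
      show "ee i b' = 0" if "b' < 6" "a \<le> b'" for b' using that 2 n by (simp add: ee_def)
      show "ee i (yi n b') = 0" if "b' < 6" "b' + k < 5" for b' using that 2 n by (auto simp: ee_def)
      show "ee i j = 0" if "6 \<le> j" "j < 2*n-6" "j \<notin> {6..<6+p}" for j using that 2 n by (simp add: ee_def)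
    qed
  next
    case 3
    then show ?thesis unfolding Uset_def gset_mem PU_def QU_def using n p yi_big[OF n, of _ i]
      by (auto simp: ee_def)
  qed
qed

lemma U_det:
  assumes n: "6 \<le> n" and v: "v \<in> Uset n a k p" and z: "\<forall>q\<in>set (idxU n a k p). v q = 0"
  shows "v = (\<lambda>_. 0)"
proof (rule gset_zero[OF n v[unfolded Uset_def]])
  have pu: "PU a v" and qu: "QU k (\<lambda>b. v (yi n b))" using v unfolding Uset_def gset_mem by auto
  show "v b = 0" if "b < 6" for b
  proof (cases "b < a")
    case True then show ?thesis using z by (simp add: set_idxU)
  next
    case False then show ?thesis using pu that by (simp add: PU_def)
  qed
  show "v (yi n b) = 0" if "b < 6" for b
  proof (cases "b + k < 5")
    case True then show ?thesis using qu that by (simp add: QU_def)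
  next
    case False
    then have "yi n b \<in> set (idxU n a k p)" using that by (auto simp: set_idxU)
    then show ?thesis using z by blast
  qed
  show "v i = 0" if "i \<in> {6..<6+p}" for i using z that by (simp add: set_idxU)
qed

lemma U_span:
  assumes n: "6 \<le> n" and a: "a \<le> 6" and p: "6 + p \<le> n"
  shows "lin_indep (map ee (idxU n a k p) :: (nat \<Rightarrow> 'a::field) list)"
    "lspan (map ee (idxU n a k p)) = (Uset n a k p :: (nat \<Rightarrow> 'a) set)"
proof -
  have l: "length (idxU n a k p) = length (map ee (idxU n a k p) :: (nat \<Rightarrow> 'a) list)" by simp
  have piv: "\<And>j k'. j < length (map ee (idxU n a k p) :: (nat \<Rightarrow> 'a) list) \<Longrightarrow> k' < length (map ee (idxU n a k p) :: (nat \<Rightarrow> 'a) list) \<Longrightarrow>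
     ((map ee (idxU n a k p) :: (nat \<Rightarrow> 'a) list) ! j) (idxU n a k p ! k') = (if j = k' then 1 else 0)"
    using map_ee_piv[where 'a='a, OF distinct_idxU[OF n a p]] by simp
  have inX: "\<And>j. j < length (map ee (idxU n a k p) :: (nat \<Rightarrow> 'a) list) \<Longrightarrow> (map ee (idxU n a k p) :: (nat \<Rightarrow> 'a) list) ! j \<in> Uset n a k p"
    using ee_idx_in_U[where 'a='a, OF n a p] by simp
  show "lin_indep (map ee (idxU n a k p) :: (nat \<Rightarrow> 'a::field) list)"
    "lspan (map ee (idxU n a k p)) = (Uset n a k p :: (nat \<Rightarrow> 'a) set)"
    by (rule pivot_span_set[OF l piv inX U_linsub U_det[OF n]], assumption+)+
qed

lemma U_dim:
  assumes n: "6 \<le> n" and a: "a \<le> 6" and p: "6 + p \<le> n" and k: "k \<le> 5"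
  shows "subspace_dim n (Uset n a k p :: (nat \<Rightarrow> 'a::field) set) (a + (k + 1) + p)"
proof -
  have s: "set (map ee (idxU n a k p) :: (nat \<Rightarrow> 'a) list) \<subseteq> vecs n"
  proof
    fix v assume "v \<in> set (map ee (idxU n a k p) :: (nat \<Rightarrow> 'a) list)"
    then obtain i where i: "i \<in> set (idxU n a k p)" "v = ee i" by auto
    show "v \<in> vecs n" using ee_idx_in_U[where 'a='a, OF n a p i(1)] U_vecs i(2) by blast
  qed
  have l: "length (map ee (idxU n a k p) :: (nat \<Rightarrow> 'a) list) = a + (k + 1) + p"
    using len_idxU[OF k, of n a p] by simp
  show ?thesis unfolding subspace_dim_def
    using s U_span[where 'a='a, OF n a p] l by blast
qed

lemma U_mono: "a \<le> a' \<Longrightarrow> k \<le> k' \<Longrightarrow> p \<le> p' \<Longrightarrow> Uset n a k p \<subseteq> Uset n a' k' p'"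
  unfolding Uset_def gset_def PU_def QU_def by auto

lemma U_iso: assumes n: "6 \<le> n" and p: "6 + p \<le> n" shows "isotropic n (Uset n 2 3 p :: (nat \<Rightarrow> 'a::field) set)"
  unfolding isotropic_def
proof (intro ballI)
  fix u v :: "nat \<Rightarrow> 'a" assume u: "u \<in> Uset n 2 3 p" and v: "v \<in> Uset n 2 3 p"
  have "bform n u v = (\<Sum>a<6. u a * v (yi n a)) + (\<Sum>a<6. u (yi n a) * v a)"
    using gset_iso[OF n u[unfolded Uset_def] v[unfolded Uset_def]] p by simp
  also have "\<dots> = 0"
  proof -
    have pu: "PU 2 u" "QU 3 (\<lambda>a. u (yi n a))" "PU 2 v" "QU 3 (\<lambda>a. v (yi n a))"
      using u v unfolding Uset_def gset_mem by auto
    then show ?thesis unfolding sum6 PU_def QU_def by simp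
  qed
  finally show "bform n u v = 0" .
qed

definition aU :: "nat \<Rightarrow> nat \<Rightarrow> nat \<Rightarrow> nat" where
  "aU i0 j0 k = (if i0 \<le> k then 1 else 0) + (if j0 \<le> k then 1 else 0)"
definition pU :: "nat list \<Rightarrow> nat \<Rightarrow> nat \<Rightarrow> nat \<Rightarrow> nat" where
  "pU gs i0 j0 k = sum_list (take (Suc k) gs) - (k + 1 + aU i0 j0 k)"
definition Zfl :: "nat \<Rightarrow> nat list \<Rightarrow> nat \<Rightarrow> nat \<Rightarrow> (nat \<Rightarrow> 'a::field) set list" where
  "Zfl n gs i0 j0 = map (\<lambda>k. Uset n (aU i0 j0 k) k (pU gs i0 j0 k)) [0..<4]"

lemma less4_cases': "(k::nat) < 4 \<Longrightarrow> k = 0 \<or> k = 1 \<or> k = 2 \<or> k = 3" by auto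

context
  fixes g1 g2 g3 g4 i0 j0 n :: nat
  assumes pos: "0 < g1" "0 < g2" "0 < g3" "0 < g4"
    and sm: "g1 + g2 + g3 + g4 = n"
    and ij: "i0 < j0" "j0 < 4" "2 \<le> [g1,g2,g3,g4] ! i0" "2 \<le> [g1,g2,g3,g4] ! j0"
begin

lemma i04: "i0 < 4" using ij by simp
lemma j04: "j0 < 4" using ij by simp

lemma dims_ok: assumes k: "k < 4" shows "k + 1 + aU i0 j0 k \<le> sum_list (take (Suc k) [g1,g2,g3,g4])"
  using less4_cases'[OF k] less4_cases'[OF i04] less4_cases'[OF j04] ij pos
  by (elim disjE) (auto simp: aU_def)

lemma aU_le: "aU i0 j0 k \<le> 2" by (simp add: aU_def)
lemma aU_3: "aU i0 j0 3 = 2" using ij by (simp add: aU_def)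
lemma pU_3: "pU [g1,g2,g3,g4] i0 j0 3 = n - 6" using ij sm by (simp add: pU_def aU_def)

lemma pU_mono: assumes k: "k < 3" shows "pU [g1,g2,g3,g4] i0 j0 k \<le> pU [g1,g2,g3,g4] i0 j0 (Suc k)"
  using less4_cases'[of k] k less4_cases'[OF i04] less4_cases'[OF j04] ij pos
  by (elim disjE) (auto simp: aU_def pU_def)

lemma aU_mono: "aU i0 j0 k \<le> aU i0 j0 (Suc k)" by (simp add: aU_def)

lemma pU_le: assumes k: "k < 4" shows "6 + pU [g1,g2,g3,g4] i0 j0 k \<le> n"
  using less4_cases'[OF k] less4_cases'[OF i04] less4_cases'[OF j04] ij pos sm
  by (elim disjE) (auto simp: aU_def pU_def)

lemma n6: "6 \<le> n"
  using less4_cases'[OF i04] less4_cases'[OF j04] ij pos sm by (elim disjE) auto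

lemma Z_flags: "Zfl n [g1,g2,g3,g4] i0 j0 \<in> (flags n [g1,g2,g3,g4] :: (nat \<Rightarrow> 'a::field) set list set)"
  unfolding flags_def
proof (intro CollectI conjI allI impI)
  show "length (Zfl n [g1, g2, g3, g4] i0 j0 :: (nat \<Rightarrow> 'a) set list) = length [g1, g2, g3, g4]"
    by (simp add: Zfl_def)
  show "subspace_dim n ((Zfl n [g1, g2, g3, g4] i0 j0 :: (nat \<Rightarrow> 'a) set list) ! j) (sum_list (take (Suc j) [g1, g2, g3, g4]))"
    if j: "j < length [g1, g2, g3, g4]" for j
  proof -
    have j4: "j < 4" using j by simp
    have e: "aU i0 j0 j + (j + 1) + pU [g1,g2,g3,g4] i0 j0 j = sum_list (take (Suc j) [g1,g2,g3,g4])"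
      using dims_ok[OF j4] unfolding pU_def by simp
    have "subspace_dim n (Uset n (aU i0 j0 j) j (pU [g1,g2,g3,g4] i0 j0 j) :: (nat \<Rightarrow> 'a) set)
        (aU i0 j0 j + (j + 1) + pU [g1,g2,g3,g4] i0 j0 j)"
      by (rule U_dim[OF n6]) (use aU_le[of j] pU_le[OF j4] j4 in auto)
    then show ?thesis using e j4 by (simp add: Zfl_def)
  qed
  show "(Zfl n [g1, g2, g3, g4] i0 j0 :: (nat \<Rightarrow> 'a) set list) ! j \<subseteq> Zfl n [g1, g2, g3, g4] i0 j0 ! Suc j"
    if j: "Suc j < length [g1, g2, g3, g4]" for j
  proof -
    have j3: "j < 3" using j by simp
    have jj: "j \<le> Suc j" by simp
    show ?thesis using U_mono[where 'a='a, OF aU_mono[of j] jj pU_mono[OF j3], of n] j3 by (simp add: Zfl_def)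
  qed
  show "isotropic n (last (Zfl n [g1, g2, g3, g4] i0 j0 :: (nat \<Rightarrow> 'a) set list))"
  proof -
    have "last (Zfl n [g1, g2, g3, g4] i0 j0 :: (nat \<Rightarrow> 'a) set list) = Uset n 2 3 (n - 6)"
      using aU_3 pU_3 by (simp add: Zfl_def eval_nat_numeral)
    then show ?thesis using U_iso[OF n6, of "n - 6"] n6 by simp
  qed
qed

end

lemma L_flags: "6 \<le> n \<Longrightarrow> [Lset n r] \<in> flags n [n]"
  unfolding flags_def using L_dim[of n r] L_iso[of n r] by simp

lemma W_flags: "6 \<le> n \<Longrightarrow> \<beta> + 2 \<le> n \<Longrightarrow> 4 \<le> \<beta> \<Longrightarrow> [Wset n \<beta> :: (nat \<Rightarrow> 'a::field) set] \<in> flags n [\<beta>]"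
  unfolding flags_def using W_dim[of n \<beta>, where 'a='a] W_iso[of n \<beta>, where 'a='a] by simp

definition perpS :: "nat \<Rightarrow> (nat \<Rightarrow> 'a::field) set \<Rightarrow> (nat \<Rightarrow> 'a) set" where
  "perpS n X = {v \<in> vecs n. \<forall>u\<in>X. bform n v u = 0}"
definition msum :: "(nat \<Rightarrow> 'a::field) set \<Rightarrow> (nat \<Rightarrow> 'a) set \<Rightarrow> (nat \<Rightarrow> 'a) set" where
  "msum X Y = {(\<lambda>i. x i + y i) | x y. x \<in> X \<and> y \<in> Y}"

definition Zx where "Zx n W U4 = perpS n W \<inter> U4"
definition l1x where "l1x n W U3 = perpS n W \<inter> U3"
definition l2x where "l2x n L W U4 = msum L W \<inter> Zx n W U4"
definition l3x where "l3x n L W U2 U4 = msum L U2 \<inter> Zx n W U4"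
definition l4x where "l4x n L W U1 U4 Ui = Zx n W U4 \<inter> msum (msum L U1) (W \<inter> perpS n Ui)"

definition PhiS :: "nat \<Rightarrow> (nat \<Rightarrow> 'a::field) set \<Rightarrow> (nat \<Rightarrow> 'a) set \<Rightarrow> (nat \<Rightarrow> 'a) set \<Rightarrow> (nat \<Rightarrow> 'a) set
   \<Rightarrow> (nat \<Rightarrow> 'a) set \<Rightarrow> (nat \<Rightarrow> 'a) set \<Rightarrow> (nat \<Rightarrow> 'a) set \<Rightarrow> 'a \<Rightarrow> bool" where
  "PhiS n L W U1 U2 U3 U4 Ui t \<longleftrightarrow> (\<exists>x1 x2 y1 y2. x1 \<in> vecs n \<and> x2 \<in> vecs n
     \<and> (\<forall>z\<in>l2x n L W U4. bform n x1 z = 0) \<and> (\<forall>z\<in>l4x n L W U1 U4 Ui. bform n x2 z = 0)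
     \<and> y1 \<in> l1x n W U3 \<and> y2 \<in> l3x n L W U2 U4
     \<and> bform n x1 y2 \<noteq> 0 \<and> bform n x2 y1 \<noteq> 0
     \<and> bform n x1 y1 * bform n x2 y2 = t * (bform n x1 y2 * bform n x2 y1))"

definition compat :: "nat \<Rightarrow> ((nat \<Rightarrow> 'a::field) \<Rightarrow> (nat \<Rightarrow> 'a)) \<Rightarrow> (nat \<Rightarrow> 'a) set \<Rightarrow> (nat \<Rightarrow> 'a) set \<Rightarrow> bool" where
  "compat n g A A' \<longleftrightarrow> A \<subseteq> vecs n \<and> A' \<subseteq> vecs n \<and> (\<forall>z\<in>vecs n. g z \<in> A' \<longleftrightarrow> z \<in> A)"

lemma vecs_add: "x \<in> vecs n \<Longrightarrow> y \<in> vecs n \<Longrightarrow> (\<lambda>i. x i + y i) \<in> vecs n"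
  unfolding vecs_def by auto

lemma perpS_vecs: "perpS n X \<subseteq> vecs n" unfolding perpS_def by auto
lemma msum_vecs: "X \<subseteq> vecs n \<Longrightarrow> Y \<subseteq> vecs n \<Longrightarrow> msum X Y \<subseteq> vecs n"
  unfolding msum_def using vecs_add by blast

context
  fixes n :: nat and g :: "(nat \<Rightarrow> 'a::field) \<Rightarrow> (nat \<Rightarrow> 'a)"
  assumes bij: "bij_betw g (vecs n) (vecs n)"
    and pres: "\<And>u v. u \<in> vecs n \<Longrightarrow> v \<in> vecs n \<Longrightarrow> bform n (g u) (g v) = bform n u v"
    and addg: "\<And>x y. g (\<lambda>i. x i + y i) = (\<lambda>i. g x i + g y i)"
begin

lemma g_vecs: "z \<in> vecs n \<Longrightarrow> g z \<in> vecs n" using bij bij_betwE by blast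
lemma g_inj: "z \<in> vecs n \<Longrightarrow> w \<in> vecs n \<Longrightarrow> g z = g w \<Longrightarrow> z = w"
  using bij unfolding bij_betw_def inj_on_def by blast
lemma g_surj: "z' \<in> vecs n \<Longrightarrow> \<exists>z\<in>vecs n. z' = g z"
  using bij unfolding bij_betw_def by auto

lemma c_gen: "X \<subseteq> vecs n \<Longrightarrow> compat n g X (g ` X)"
  unfolding compat_def
proof (intro conjI ballI)
  assume X: "X \<subseteq> vecs n"
  show "X \<subseteq> vecs n" by fact
  show "g ` X \<subseteq> vecs n" using X g_vecs by blast
  fix z :: "nat \<Rightarrow> 'a" assume z: "z \<in> vecs n"
  show "g z \<in> g ` X \<longleftrightarrow> z \<in> X"
  proof
    assume "g z \<in> g ` X"
    then obtain x where x: "x \<in> X" "g z = g x" by blast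
    then have "z = x" using g_inj[OF z] X by blast
    then show "z \<in> X" using x by simp
  qed simp
qed

lemma c_int: "compat n g A A' \<Longrightarrow> compat n g B B' \<Longrightarrow> compat n g (A \<inter> B) (A' \<inter> B')"
  unfolding compat_def by blast

lemma c_perp: assumes "compat n g A A'" shows "compat n g (perpS n A) (perpS n A')"
  unfolding compat_def
proof (intro conjI ballI)
  show "perpS n A \<subseteq> vecs n" "perpS n A' \<subseteq> vecs n" by (rule perpS_vecs)+
  fix z :: "nat \<Rightarrow> 'a" assume z: "z \<in> vecs n"
  have AA: "A \<subseteq> vecs n" "A' \<subseteq> vecs n" "\<And>w. w \<in> vecs n \<Longrightarrow> g w \<in> A' \<longleftrightarrow> w \<in> A"
    using assms unfolding compat_def by auto
  show "g z \<in> perpS n A' \<longleftrightarrow> z \<in> perpS n A"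
  proof
    assume h: "g z \<in> perpS n A'"
    have "bform n z u = 0" if u: "u \<in> A" for u
    proof -
      have "u \<in> vecs n" using u AA by blast
      then have "g u \<in> A'" using AA(3) u by blast
      then have "bform n (g z) (g u) = 0" using h unfolding perpS_def by blast
      then show ?thesis using pres[OF z] \<open>u \<in> vecs n\<close> by simp
    qed
    then show "z \<in> perpS n A" using z unfolding perpS_def by blast
  next
    assume h: "z \<in> perpS n A"
    have "bform n (g z) u' = 0" if u': "u' \<in> A'" for u'
    proof -
      obtain u where u: "u \<in> vecs n" "u' = g u" using g_surj u' AA by blast
      then have "u \<in> A" using AA(3) u' by blast
      then have "bform n z u = 0" using h unfolding perpS_def by blast
      then show ?thesis using pres[OF z u(1)] u(2) by simp
    qed
    then show "g z \<in> perpS n A'" using g_vecs[OF z] unfolding perpS_def by blast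
  qed
qed

lemma c_sum: assumes "compat n g A A'" "compat n g B B'" shows "compat n g (msum A B) (msum A' B')"
  unfolding compat_def
proof (intro conjI ballI)
  have AA: "A \<subseteq> vecs n" "A' \<subseteq> vecs n" "\<And>w. w \<in> vecs n \<Longrightarrow> g w \<in> A' \<longleftrightarrow> w \<in> A"
    and BB: "B \<subseteq> vecs n" "B' \<subseteq> vecs n" "\<And>w. w \<in> vecs n \<Longrightarrow> g w \<in> B' \<longleftrightarrow> w \<in> B"
    using assms unfolding compat_def by auto
  show "msum A B \<subseteq> vecs n" "msum A' B' \<subseteq> vecs n" using msum_vecs AA BB by blast+
  fix z :: "nat \<Rightarrow> 'a" assume z: "z \<in> vecs n"
  show "g z \<in> msum A' B' \<longleftrightarrow> z \<in> msum A B"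
  proof
    assume "g z \<in> msum A' B'"
    then obtain x' y' where h: "x' \<in> A'" "y' \<in> B'" "g z = (\<lambda>i. x' i + y' i)" unfolding msum_def by blast
    obtain x where x: "x \<in> vecs n" "x' = g x" using g_surj h(1) AA by blast
    obtain y where y: "y \<in> vecs n" "y' = g y" using g_surj h(2) BB by blast
    have xA: "x \<in> A" using AA(3)[OF x(1)] h(1) x(2) by simp
    have yB: "y \<in> B" using BB(3)[OF y(1)] h(2) y(2) by simp
    have "g z = g (\<lambda>i. x i + y i)" using h(3) x(2) y(2) addg by simp
    then have "z = (\<lambda>i. x i + y i)" using g_inj[OF z vecs_add[OF x(1) y(1)]] by simp
    then show "z \<in> msum A B" using xA yB unfolding msum_def by blast
  next
    assume "z \<in> msum A B"
    then obtain x y where h: "x \<in> A" "y \<in> B" "z = (\<lambda>i. x i + y i)" unfolding msum_def by blast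
    have "g x \<in> A'" "g y \<in> B'" using AA BB h by blast+
    moreover have "g z = (\<lambda>i. g x i + g y i)" using h(3) addg by simp
    ultimately show "g z \<in> msum A' B'" unfolding msum_def by blast
  qed
qed

lemma PhiS_inv:
  assumes sets: "L \<subseteq> vecs n" "W \<subseteq> vecs n" "U1 \<subseteq> vecs n" "U2 \<subseteq> vecs n" "U3 \<subseteq> vecs n" "U4 \<subseteq> vecs n" "Ui \<subseteq> vecs n"
    and ph: "PhiS n L W U1 U2 U3 U4 Ui t"
  shows "PhiS n (g ` L) (g ` W) (g ` U1) (g ` U2) (g ` U3) (g ` U4) (g ` Ui) t"
proof -
  note cg = c_gen[OF sets(1)] c_gen[OF sets(2)] c_gen[OF sets(3)] c_gen[OF sets(4)] c_gen[OF sets(5)]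
     c_gen[OF sets(6)] c_gen[OF sets(7)]
  have cZ: "compat n g (Zx n W U4) (Zx n (g ` W) (g ` U4))"
    unfolding Zx_def by (rule c_int[OF c_perp[OF cg(2)] cg(6)])
  have c1: "compat n g (l1x n W U3) (l1x n (g ` W) (g ` U3))"
    unfolding l1x_def by (rule c_int[OF c_perp[OF cg(2)] cg(5)])
  have c2: "compat n g (l2x n L W U4) (l2x n (g ` L) (g ` W) (g ` U4))"
    unfolding l2x_def by (rule c_int[OF c_sum[OF cg(1) cg(2)] cZ])
  have c3: "compat n g (l3x n L W U2 U4) (l3x n (g ` L) (g ` W) (g ` U2) (g ` U4))"
    unfolding l3x_def by (rule c_int[OF c_sum[OF cg(1) cg(4)] cZ])
  have c4: "compat n g (l4x n L W U1 U4 Ui) (l4x n (g ` L) (g ` W) (g ` U1) (g ` U4) (g ` Ui))"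
    unfolding l4x_def by (rule c_int[OF cZ c_sum[OF c_sum[OF cg(1) cg(3)] c_int[OF cg(2) c_perp[OF cg(7)]]]])
  obtain x1 x2 y1 y2 where w: "x1 \<in> vecs n" "x2 \<in> vecs n"
     "\<forall>z\<in>l2x n L W U4. bform n x1 z = 0" "\<forall>z\<in>l4x n L W U1 U4 Ui. bform n x2 z = 0"
     "y1 \<in> l1x n W U3" "y2 \<in> l3x n L W U2 U4"
     "bform n x1 y2 \<noteq> 0" "bform n x2 y1 \<noteq> 0"
     "bform n x1 y1 * bform n x2 y2 = t * (bform n x1 y2 * bform n x2 y1)"
    using ph unfolding PhiS_def by blast
  have y1v: "y1 \<in> vecs n" using w(5) c1 unfolding compat_def by blast
  have y2v: "y2 \<in> vecs n" using w(6) c3 unfolding compat_def by blast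
  have gy1: "g y1 \<in> l1x n (g ` W) (g ` U3)" using c1 w(5) y1v unfolding compat_def by blast
  have gy2: "g y2 \<in> l3x n (g ` L) (g ` W) (g ` U2) (g ` U4)" using c3 w(6) y2v unfolding compat_def by blast
  have gx1: "\<forall>z\<in>l2x n (g ` L) (g ` W) (g ` U4). bform n (g x1) z = 0"
  proof
    fix z assume z: "z \<in> l2x n (g ` L) (g ` W) (g ` U4)"
    then have zv: "z \<in> vecs n" using c2 unfolding compat_def by blast
    obtain z0 where z0: "z0 \<in> vecs n" "z = g z0" using g_surj[OF zv] by blast
    then have "z0 \<in> l2x n L W U4" using c2 z unfolding compat_def by blast
    then show "bform n (g x1) z = 0" using w(3) pres[OF w(1) z0(1)] z0(2) by simp
  qed
  have gx2: "\<forall>z\<in>l4x n (g ` L) (g ` W) (g ` U1) (g ` U4) (g ` Ui). bform n (g x2) z = 0"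
  proof
    fix z assume z: "z \<in> l4x n (g ` L) (g ` W) (g ` U1) (g ` U4) (g ` Ui)"
    then have zv: "z \<in> vecs n" using c4 unfolding compat_def by blast
    obtain z0 where z0: "z0 \<in> vecs n" "z = g z0" using g_surj[OF zv] by blast
    then have "z0 \<in> l4x n L W U1 U4 Ui" using c4 z unfolding compat_def by blast
    then show "bform n (g x2) z = 0" using w(4) pres[OF w(2) z0(1)] z0(2) by simp
  qed
  show ?thesis unfolding PhiS_def
    apply (rule exI[of _ "g x1"], rule exI[of _ "g x2"], rule exI[of _ "g y1"], rule exI[of _ "g y2"])
    using g_vecs[OF w(1)] g_vecs[OF w(2)] gx1 gx2 gy1 gy2 w(7-9)
      pres[OF w(1) y1v] pres[OF w(1) y2v] pres[OF w(2) y1v] pres[OF w(2) y2v] by simp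
qed

end

definition yv :: "nat \<Rightarrow> (nat \<Rightarrow> 'a::field) \<Rightarrow> nat \<Rightarrow> 'a" where
  "yv n c = (\<lambda>i. if 2*n - 6 \<le> i \<and> i < 2*n then c (2*n-1-i) else 0)"

lemma yv_Y: "6 \<le> n \<Longrightarrow> a < 6 \<Longrightarrow> yv n c a = 0" unfolding yv_def by (simp; arith)
lemma yv_yi: "6 \<le> n \<Longrightarrow> b < 6 \<Longrightarrow> yv n c (yi n b) = c b" unfolding yv_def yi_def by (simp; arith)
lemma yv_mid: "6 \<le> n \<Longrightarrow> i < 2*n-6 \<Longrightarrow> yv n c i = 0" by (simp add: yv_def)
lemma yv_big: "2*n \<le> i \<Longrightarrow> yv n c i = 0" by (simp add: yv_def)
lemma yv_add: "(\<lambda>i. yv n c i + yv n d i) = yv n (\<lambda>a. c a + d a)" by (auto simp: yv_def fun_eq_iff)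

lemma yv_in_gset: assumes "6 \<le> n" "P (yv n c)" "Q (\<lambda>a. yv n c (yi n a))" shows "yv n c \<in> gset n P Q K"
  unfolding gset_mem using assms yv_mid[OF assms(1)] yv_big by auto

lemma bform_yv1: assumes n: "6 \<le> n" shows "bform n (yv n c) w = (\<Sum>a<6. c a * w a)"
proof -
  have "(\<Sum>i\<in>{6..<2*n-6}. yv n c i * w (2*n-1-i)) = 0"
    by (rule sum.neutral) (auto simp: yv_mid[OF n])
  then show ?thesis using bform_split[OF n, of "yv n c" w] by (simp add: yv_Y[OF n] yv_yi[OF n])
qed

lemma bform_ee_yv: assumes n: "6 \<le> n" "k < 6" shows "bform n (ee k) (yv n c) = c k"
proof -
  have "bform n (ee k) (yv n c) = yv n c (2*n - 1 - k)" using bform_ee1[of k n] assms by simp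
  also have "2*n - 1 - k = yi n k" by (simp add: yi_def)
  finally show ?thesis using yv_yi[OF assms] by simp
qed

lemma bform_Ystar:
  assumes n: "6 \<le> n" and x: "\<And>i. n \<le> i \<Longrightarrow> i < 2*n-6 \<Longrightarrow> x i = 0"
    and y: "\<And>i. n \<le> i \<Longrightarrow> i < 2*n-6 \<Longrightarrow> y i = 0" "\<And>a. a < 6 \<Longrightarrow> y a = 0"
  shows "bform n x y = (\<Sum>a<6. x a * y (yi n a))"
proof -
  have "(\<Sum>i\<in>{6..<2*n-6}. x i * y (2*n-1-i)) = 0"
  proof (rule sum.neutral, rule ballI)
    fix i assume i: "i \<in> {6..<2*n-6}"
    show "x i * y (2*n-1-i) = 0"
    proof (cases "i < n")
      case True then have "y (2*n-1-i) = 0" using y(1) i by auto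
      then show ?thesis by simp
    next
      case False then show ?thesis using x i by auto
    qed
  qed
  moreover have "(\<Sum>a<6. x (yi n a) * y a) = 0" using y(2) by simp
  ultimately show ?thesis using bform_split[OF n, of x y] by simp
qed

lemma U_facts:
  assumes "v \<in> Uset n a k p"
  shows "\<And>b. b < 6 \<Longrightarrow> a \<le> b \<Longrightarrow> v b = 0" "\<And>b. b < 6 \<Longrightarrow> b + k < 5 \<Longrightarrow> v (yi n b) = 0"
    "\<And>i. 6 \<le> i \<Longrightarrow> i < 2*n-6 \<Longrightarrow> i \<notin> {6..<6+p} \<Longrightarrow> v i = 0"
  using assms unfolding Uset_def gset_mem PU_def QU_def by auto

lemma W_has: assumes n: "6 \<le> n"
  shows "ee 4 \<in> Wset n \<beta>" "ee 5 \<in> Wset n \<beta>" "(\<lambda>i. ys n 0 i - ys n 2 i) \<in> Wset n \<beta>"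
    "(\<lambda>i. ys n 1 i - ys n 2 i - ys n 3 i) \<in> Wset n \<beta>"
  using bWc_in[OF n, of 0 \<beta>] bWc_in[OF n, of 1 \<beta>] bWc_in[OF n, of 2 \<beta>] bWc_in[OF n, of 3 \<beta>]
  by (simp_all add: bWc_def)

lemma perpW_facts:
  assumes n: "6 \<le> n" and v: "v \<in> perpS n (Wset n \<beta>)"
  shows "v (yi n 4) = 0" "v (yi n 5) = 0" "v 0 = v 2" "v 1 = v 2 + v 3"
proof -
  have b: "\<And>w. w \<in> Wset n \<beta> \<Longrightarrow> bform n v w = 0" using v unfolding perpS_def by blast
  have "bform n v (ee 4) = v (yi n 4)" using bform_ee2[of 4 n v] n by (simp add: yi_def)
  then show "v (yi n 4) = 0" using b[OF W_has(1)[OF n]] by simp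
  have "bform n v (ee 5) = v (yi n 5)" using bform_ee2[of 5 n v] n by (simp add: yi_def)
  then show "v (yi n 5) = 0" using b[OF W_has(2)[OF n]] by simp
  have "bform n v (\<lambda>i. ys n 0 i - ys n 2 i) = v 0 - v 2" using n by (simp add: bform_diff2 bform_ys2)
  then show "v 0 = v 2" using b[OF W_has(3)[OF n]] by simp
  have "bform n v (\<lambda>i. ys n 1 i - ys n 2 i - ys n 3 i) = v 1 - v 2 - v 3" using n by (simp add: bform_diff2 bform_ys2)
  then show "v 1 = v 2 + v 3" using b[OF W_has(4)[OF n]] by (simp add: algebra_simps)
qed

lemma W_PT: "w \<in> Wset n \<beta> \<Longrightarrow> w 0 = 0 \<and> w 1 = 0 \<and> w 2 = 0 \<and> w 3 = 0"
  unfolding Wset_def gset_mem PT_def by auto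
lemma W_QT: "w \<in> Wset n \<beta> \<Longrightarrow> QT (\<lambda>a. w (yi n a))"
  unfolding Wset_def gset_mem by auto
lemma W_pad: "w \<in> Wset n \<beta> \<Longrightarrow> 6 \<le> i \<Longrightarrow> i < 2*n-6 \<Longrightarrow> i \<notin> {6..<\<beta>+2} \<Longrightarrow> w i = 0"
  unfolding Wset_def gset_mem by auto
lemma L_QS: "l \<in> Lset n r \<Longrightarrow> QS r (\<lambda>a. l (yi n a))"
  unfolding Lset_def gset_mem by auto

context
  fixes n \<beta> :: nat
  assumes n: "6 \<le> n" and b: "\<beta> + 2 \<le> n" "4 \<le> \<beta>"
begin

lemma Zx_char:
  assumes z: "z \<in> Zx n (Wset n \<beta>) (Uset n 2 3 (n-6))"
  shows "\<And>a. a < 6 \<Longrightarrow> z a = 0" "z (yi n 0) = 0" "z (yi n 1) = 0" "z (yi n 4) = 0" "z (yi n 5) = 0"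
    "\<And>i. n \<le> i \<Longrightarrow> i < 2*n-6 \<Longrightarrow> z i = 0"
proof -
  have zp: "z \<in> perpS n (Wset n \<beta>)" and zu: "z \<in> Uset n 2 3 (n-6)" using z unfolding Zx_def by auto
  note pf = perpW_facts[OF n zp] and uf = U_facts[OF zu]
  have z2: "z 2 = 0" "z 3 = 0" using uf(1)[of 2] uf(1)[of 3] by auto
  show "z a = 0" if "a < 6" for a
  proof (cases "2 \<le> a")
    case True then show ?thesis using uf(1) that by blast
  next
    case False then have "a = 0 \<or> a = 1" by auto
    then show ?thesis using pf z2 by auto
  qed
  show "z (yi n 0) = 0" "z (yi n 1) = 0" using uf(2)[of 0] uf(2)[of 1] by auto
  show "z (yi n 4) = 0" "z (yi n 5) = 0" using pf by auto
  show "z i = 0" if "n \<le> i" "i < 2*n-6" for i using uf(3)[of i] that n by auto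
qed

lemma l1_char:
  assumes z: "z \<in> l1x n (Wset n \<beta>) (Uset n a2 2 p2)" and a2: "a2 \<le> 2" and p2: "6 + p2 \<le> n"
  shows "\<And>a. a < 6 \<Longrightarrow> z a = 0" "\<And>c. c < 6 \<Longrightarrow> c \<noteq> 3 \<Longrightarrow> z (yi n c) = 0"
    "\<And>i. n \<le> i \<Longrightarrow> i < 2*n-6 \<Longrightarrow> z i = 0"
proof -
  have zp: "z \<in> perpS n (Wset n \<beta>)" and zu: "z \<in> Uset n a2 2 p2" using z unfolding l1x_def by auto
  note pf = perpW_facts[OF n zp] and uf = U_facts[OF zu]
  have z2: "z 2 = 0" "z 3 = 0" "z 4 = 0" "z 5 = 0" using uf(1)[of 2] uf(1)[of 3] uf(1)[of 4] uf(1)[of 5] a2 by auto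
  show "z a = 0" if "a < 6" for a
    using less6_cases[OF that] pf z2 by auto
  show "z (yi n c) = 0" if "c < 6" "c \<noteq> 3" for c
    using less6_cases[OF that(1)] that(2) uf(2)[of 0] uf(2)[of 1] uf(2)[of 2] pf by auto
  show "z i = 0" if "n \<le> i" "i < 2*n-6" for i using uf(3)[of i] that n p2 by auto
qed

lemma l3_char:
  assumes z: "z \<in> l3x n (Lset n r) (Wset n \<beta>) (Uset n a1 1 p1) (Uset n 2 3 (n-6))"
  shows "z (yi n 3) = r * z (yi n 2)"
proof -
  have zs: "z \<in> msum (Lset n r) (Uset n a1 1 p1)" and zz: "z \<in> Zx n (Wset n \<beta>) (Uset n 2 3 (n-6))"
    using z unfolding l3x_def by auto
  obtain l u where lu: "l \<in> Lset n r" "u \<in> Uset n a1 1 p1" "z = (\<lambda>i. l i + u i)" using zs unfolding msum_def by blast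
  note qs = L_QS[OF lu(1)] and uf = U_facts[OF lu(2)]
  have u: "u (yi n 2) = 0" "u (yi n 3) = 0" using uf(2)[of 2] uf(2)[of 3] by auto
  have "z (yi n 4) = 0" using Zx_char(4)[OF zz] .
  then have l4: "l (yi n 4) = - u (yi n 4)" using lu(3) by (simp add: eq_neg_iff_add_eq_0)
  have "z (yi n 2) = l (yi n 2)" "z (yi n 3) = l (yi n 3)" using lu(3) u by auto
  then show ?thesis using qs l4 unfolding QS_def by auto
qed

lemma l2_char:
  assumes z: "z \<in> l2x n (Lset n r) (Wset n \<beta>) (Uset n 2 3 (n-6))"
  shows "z (yi n 3) = 0"
proof -
  have zs: "z \<in> msum (Lset n r) (Wset n \<beta>)" and zz: "z \<in> Zx n (Wset n \<beta>) (Uset n 2 3 (n-6))"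
    using z unfolding l2x_def by auto
  obtain l w where lw: "l \<in> Lset n r" "w \<in> Wset n \<beta>" "z = (\<lambda>i. l i + w i)" using zs unfolding msum_def by blast
  note qs = L_QS[OF lw(1)] and qt = W_QT[OF lw(2)]
  have c: "z (yi n 1) = 0" "z (yi n 4) = 0" "z (yi n 5) = 0" using Zx_char[OF zz] by auto
  have w45: "w (yi n 4) = 0" "w (yi n 5) = 0" using qt unfolding QT_def by auto
  have l45: "l (yi n 4) = 0" "l (yi n 5) = 0" using c(2,3) w45 lw(3) by auto
  have l1: "l (yi n 1) = 0" using qs l45 unfolding QS_def by auto
  have w1: "w (yi n 1) = 0" using c(1) l1 lw(3) by auto
  have "z (yi n 3) = l (yi n 3) + w (yi n 3)" using lw(3) by simp
  also have "\<dots> = 0" using qs qt l45 w1 unfolding QS_def QT_def by auto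
  finally show ?thesis .
qed

lemma l4_char:
  assumes z: "z \<in> l4x n (Lset n r) (Wset n \<beta>) (Uset n a0 0 p0) (Uset n 2 3 (n-6)) Ui"
    and e0: "ee 0 \<in> Ui" and Ui: "Ui \<subseteq> vecs n"
  shows "z (yi n 2) = z (yi n 3)"
proof -
  have zs: "z \<in> msum (msum (Lset n r) (Uset n a0 0 p0)) (Wset n \<beta> \<inter> perpS n Ui)"
    and zz: "z \<in> Zx n (Wset n \<beta>) (Uset n 2 3 (n-6))"
    using z unfolding l4x_def by auto
  obtain x w where xw: "x \<in> msum (Lset n r) (Uset n a0 0 p0)" "w \<in> Wset n \<beta>" "w \<in> perpS n Ui" "z = (\<lambda>i. x i + w i)"
    using zs unfolding msum_def by blast
  obtain l u where lu: "l \<in> Lset n r" "u \<in> Uset n a0 0 p0" "x = (\<lambda>i. l i + u i)" using xw(1) unfolding msum_def by blast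
  note qs = L_QS[OF lu(1)] and qt = W_QT[OF xw(2)] and uf = U_facts[OF lu(2)]
  have u: "u (yi n 2) = 0" "u (yi n 3) = 0" "u (yi n 4) = 0" using uf(2)[of 2] uf(2)[of 3] uf(2)[of 4] by auto
  have "bform n w (ee 0) = 0" using xw(3) e0 unfolding perpS_def by blast
  moreover have "bform n w (ee 0) = w (yi n 0)" using bform_ee2[of 0 n w] n by (simp add: yi_def)
  ultimately have w0: "w (yi n 0) = 0" by simp
  have w4: "w (yi n 4) = 0" using qt unfolding QT_def by auto
  have "z (yi n 4) = 0" using Zx_char(4)[OF zz] .
  then have l4: "l (yi n 4) = 0" using xw(4) lu(3) u w4 by auto
  have "z (yi n 2) = l (yi n 2) + w (yi n 2)" "z (yi n 3) = l (yi n 3) + w (yi n 3)"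
    using xw(4) lu(3) u by auto
  then show ?thesis using qs qt l4 w0 unfolding QS_def QT_def by auto
qed

end

lemma msumI: "x \<in> X \<Longrightarrow> y \<in> Y \<Longrightarrow> v = (\<lambda>i. x i + y i) \<Longrightarrow> v \<in> msum X Y"
  unfolding msum_def by blast

lemma zero_in_W: "(\<lambda>_. 0) \<in> Wset n \<beta>" using W_linsub unfolding linsub_def by blast
lemma zero_in_U: "(\<lambda>_. 0) \<in> Uset n a k p" using U_linsub unfolding linsub_def by blast

context
  fixes n \<beta> :: nat
  assumes n: "6 \<le> n" and b: "\<beta> + 2 \<le> n" "4 \<le> \<beta>"
begin

lemmas yvs[simp] = yv_Y[OF n] yv_yi[OF n]

lemma yv_vecs: "yv n c \<in> vecs n" unfolding vecs_def using yv_big by auto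

lemma yv_perpW: assumes "c 4 = 0" "c 5 = 0" shows "yv n c \<in> perpS n (Wset n \<beta>)"
  unfolding perpS_def
proof (intro CollectI conjI ballI)
  show "yv n c \<in> vecs n" by (rule yv_vecs)
  fix w :: "nat \<Rightarrow> 'a" assume w: "w \<in> Wset n \<beta>"
  show "bform n (yv n c) w = 0" using bform_yv1[OF n, of c w] W_PT[OF w] assms by (simp add: sum6)
qed

lemma yv_in_U: assumes "\<And>b'. b' < 6 \<Longrightarrow> b' + k < 5 \<Longrightarrow> c b' = 0" shows "yv n c \<in> Uset n a k p"
  unfolding Uset_def
  by (rule yv_in_gset[OF n]) (use assms in \<open>auto simp: PU_def QU_def\<close>)

lemma ee_perpW: assumes k: "6 \<le> k" "k < n" shows "ee k \<in> perpS n (Wset n \<beta>)"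
  unfolding perpS_def
proof (intro CollectI conjI ballI)
  show "ee k \<in> vecs n" using k by (simp add: vecs_def ee_def)
  fix w :: "nat \<Rightarrow> 'a" assume w: "w \<in> Wset n \<beta>"
  have "bform n (ee k) w = w (2*n-1-k)" using bform_ee1[of k n w] k by simp
  also have "\<dots> = 0" by (rule W_pad[OF w]) (use k b in auto)
  finally show "bform n (ee k) w = 0" .
qed

lemma ee_in_U: assumes k: "6 \<le> k" "k < 6 + p" "6 + p \<le> n" "a \<le> 6" shows "ee k \<in> Uset n a k' p"
  by (rule ee_idx_in_U[OF n assms(4) assms(3)]) (use k in \<open>simp add: set_idxU\<close>)

abbreviation "U4 \<equiv> Uset n 2 3 (n-6)"

lemma mem_Zx_yv: assumes "c 0 = 0" "c 1 = 0" "c 4 = 0" "c 5 = 0" shows "yv n c \<in> Zx n (Wset n \<beta>) U4"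
proof -
  have "yv n c \<in> U4"
  proof (rule yv_in_U)
    fix b' :: nat assume "b' < 6" "b' + 3 < 5"
    then have "b' = 0 \<or> b' = 1" by auto
    then show "c b' = 0" using assms by auto
  qed
  then show ?thesis unfolding Zx_def using yv_perpW[OF assms(3,4)] by blast
qed

lemma mem_Zx_ee: assumes k: "6 \<le> k" "k < n" shows "ee k \<in> Zx n (Wset n \<beta>) U4"
  unfolding Zx_def using ee_perpW[OF k] ee_in_U[of k "n-6" 2 3] k n by auto

lemma mem_l1: assumes a2: "a2 \<le> 6" shows "yv n (\<lambda>a. if a = 3 then 1 else 0) \<in> l1x n (Wset n \<beta>) (Uset n a2 2 p2)"
  unfolding l1x_def using yv_perpW[of "\<lambda>a. if a = 3 then 1 else 0"] yv_in_U[of 2 "\<lambda>a. if a = 3 then 1 else 0" a2 p2]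
  by auto

lemma yv_in_L: assumes "QS r c" shows "yv n c \<in> Lset n r"
  unfolding Lset_def
  by (rule yv_in_gset[OF n]) (use assms in \<open>auto simp: PS_def QS_def\<close>)

lemma yv_in_W: assumes "QT c" shows "yv n c \<in> Wset n \<beta>"
  unfolding Wset_def
  by (rule yv_in_gset[OF n]) (use assms in \<open>auto simp: PT_def QT_def\<close>)

lemma mem_l3: "yv n (\<lambda>a. if a = 2 then 1 else if a = 3 then r else 0) \<in> l3x n (Lset n r) (Wset n \<beta>) (Uset n a1 1 p1) U4"
proof -
  let ?cl = "\<lambda>a. if a = 2 then 1 else if a = 3 then r else if a = 4 then -1 else if a = 5 then 1 else (0::'a::field)"
  let ?cu = "\<lambda>a. if a = 4 then 1 else if a = 5 then -1 else (0::'a)"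
  have l: "yv n ?cl \<in> Lset n r" by (rule yv_in_L) (simp add: QS_def)
  have u: "yv n ?cu \<in> Uset n a1 1 p1" by (rule yv_in_U) auto
  have e: "(\<lambda>i. yv n ?cl i + yv n ?cu i) = yv n (\<lambda>a. if a = 2 then 1 else if a = 3 then r else 0)"
    unfolding yv_add by (rule arg_cong[where f="yv n"]) (auto simp: fun_eq_iff)
  have "yv n (\<lambda>a. if a = 2 then 1 else if a = 3 then r else 0) \<in> msum (Lset n r) (Uset n a1 1 p1)"
    using msumI[OF l u e[symmetric]] .
  moreover have "yv n (\<lambda>a. if a = 2 then 1 else if a = 3 then r else 0) \<in> Zx n (Wset n \<beta>) U4"
    by (rule mem_Zx_yv) auto
  ultimately show ?thesis unfolding l3x_def by blast
qed

lemma mem_l2_yv: "yv n (\<lambda>a. if a = 2 then 1 else 0) \<in> l2x n (Lset n r) (Wset n \<beta>) U4"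
proof -
  let ?cl = "\<lambda>a. if a = 0 then 1 else (0::'a::field)"
  let ?cw = "\<lambda>a. if a = 2 then 1 else if a = 0 then -1 else (0::'a)"
  have l: "yv n ?cl \<in> Lset n r" by (rule yv_in_L) (simp add: QS_def)
  have w: "yv n ?cw \<in> Wset n \<beta>" by (rule yv_in_W) (simp add: QT_def)
  have e: "(\<lambda>i. yv n ?cl i + yv n ?cw i) = yv n (\<lambda>a. if a = 2 then 1 else 0)"
    unfolding yv_add by (rule arg_cong[where f="yv n"]) (auto simp: fun_eq_iff)
  have "yv n (\<lambda>a. if a = 2 then 1 else 0) \<in> msum (Lset n r) (Wset n \<beta>)"
    using msumI[OF l w e[symmetric]] .
  moreover have "yv n (\<lambda>a. if a = 2 then 1 else (0::'a)) \<in> Zx n (Wset n \<beta>) U4"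
    by (rule mem_Zx_yv) auto
  ultimately show ?thesis unfolding l2x_def by blast
qed

lemma mem_l2_ee: assumes k: "6 \<le> k" "k < n" shows "ee k \<in> l2x n (Lset n r) (Wset n \<beta>) U4"
proof -
  have "(\<lambda>i. ee k i + 0) = ee k" by simp
  then have "ee k \<in> msum (Lset n r) (Wset n \<beta>)"
    unfolding msum_def using eepad_in_L[OF n k, of r] zero_in_W[of n \<beta>] by force
  then show ?thesis unfolding l2x_def using mem_Zx_ee[OF k] by blast
qed

lemma mem_l4_yv:
  assumes Ui: "\<And>u. u \<in> Ui \<Longrightarrow> u 1 = 0 \<and> u 2 = 0 \<and> u 3 = 0"
  shows "yv n (\<lambda>a. if a = 2 \<or> a = 3 then 1 else 0) \<in> l4x n (Lset n r) (Wset n \<beta>) (Uset n a0 0 p0) U4 Ui"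
proof -
  let ?cl = "\<lambda>a. if a = 1 then 1 else if a = 5 then -1 else (0::'a::field)"
  let ?cu = "\<lambda>a. if a = 5 then 1 else (0::'a)"
  let ?cw = "\<lambda>a. if a = 2 \<or> a = 3 then 1 else if a = 1 then -1 else (0::'a)"
  have l: "yv n ?cl \<in> Lset n r" by (rule yv_in_L) (simp add: QS_def)
  have u: "yv n ?cu \<in> Uset n a0 0 p0" by (rule yv_in_U) auto
  have w: "yv n ?cw \<in> Wset n \<beta>" by (rule yv_in_W) (simp add: QT_def)
  have wp: "yv n ?cw \<in> perpS n Ui"
    unfolding perpS_def
  proof (intro CollectI conjI ballI)
    show "yv n ?cw \<in> vecs n" by (rule yv_vecs)
    fix v assume v: "v \<in> Ui"
    show "bform n (yv n ?cw) v = 0" using bform_yv1[OF n, of ?cw v] Ui[OF v] by (simp add: sum6)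
  qed
  have e1: "(\<lambda>i. yv n ?cl i + yv n ?cu i) = yv n (\<lambda>a. ?cl a + ?cu a)" by (rule yv_add)
  have x: "yv n (\<lambda>a. ?cl a + ?cu a) \<in> msum (Lset n r) (Uset n a0 0 p0)"
    using msumI[OF l u e1[symmetric]] .
  have e2: "(\<lambda>i. yv n (\<lambda>a. ?cl a + ?cu a) i + yv n ?cw i) = yv n (\<lambda>a. if a = 2 \<or> a = 3 then 1 else 0)"
    unfolding yv_add by (rule arg_cong[where f="yv n"]) (auto simp: fun_eq_iff)
  have "yv n (\<lambda>a. if a = 2 \<or> a = 3 then 1 else 0) \<in> msum (msum (Lset n r) (Uset n a0 0 p0)) (Wset n \<beta> \<inter> perpS n Ui)"
    using msumI[OF x _ e2[symmetric]] w wp by blast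
  moreover have "yv n (\<lambda>a. if a = 2 \<or> a = 3 then 1 else (0::'a)) \<in> Zx n (Wset n \<beta>) U4"
    by (rule mem_Zx_yv) auto
  ultimately show ?thesis unfolding l4x_def by blast
qed

lemma mem_l4_ee:
  assumes k: "6 \<le> k" "k < n" and Ui: "Ui \<subseteq> vecs n"
  shows "ee k \<in> l4x n (Lset n r) (Wset n \<beta>) (Uset n a0 0 p0) U4 Ui"
proof -
  have z: "(\<lambda>_. 0) \<in> Wset n \<beta> \<inter> perpS n Ui"
    using zero_in_W[of n \<beta>] by (auto simp: perpS_def vecs_def bform_def)
  have "(\<lambda>i. ee k i + 0) = ee k" by simp
  then have x: "ee k \<in> msum (Lset n r) (Uset n a0 0 p0)"
    unfolding msum_def using eepad_in_L[OF n k, of r] zero_in_U[of n a0 0 p0] by force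
  have e: "ee k = (\<lambda>i. ee k i + 0)" by simp
  have "ee k \<in> msum (msum (Lset n r) (Uset n a0 0 p0)) (Wset n \<beta> \<inter> perpS n Ui)"
    using msumI[OF x z e] .
  then show ?thesis unfolding l4x_def using mem_Zx_ee[OF k] by blast
qed

end

context
  fixes n \<beta> a0 p0 a1 p1 a2 p2 ki pi :: nat
  assumes n: "6 \<le> n" and b: "\<beta> + 2 \<le> n" "4 \<le> \<beta>"
    and a2: "a2 \<le> 2" and p2: "6 + p2 \<le> n" and pi: "6 + pi \<le> n"
begin

lemma Ui_props:
  shows "ee 0 \<in> Uset n 1 ki pi" "Uset n 1 ki pi \<subseteq> vecs n"
    "\<And>u. u \<in> Uset n 1 ki pi \<Longrightarrow> u 1 = 0 \<and> u 2 = 0 \<and> u 3 = 0"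
proof -
  show "ee 0 \<in> Uset n 1 ki pi" by (rule ee_idx_in_U[OF n _ pi]) (auto simp: set_idxU)
  show "Uset n 1 ki pi \<subseteq> vecs n" by (rule U_vecs)
  fix u assume "u \<in> Uset n 1 ki pi"
  note uf = U_facts[OF this]
  show "u 1 = 0 \<and> u 2 = 0 \<and> u 3 = 0" using uf(1)[of 1] uf(1)[of 2] uf(1)[of 3] by auto
qed

lemma easy:
  fixes r :: "'a::field"
  assumes r: "r \<noteq> 0"
  shows "PhiS n (Lset n r) (Wset n \<beta>) (Uset n a0 0 p0) (Uset n a1 1 p1) (Uset n a2 2 p2) (Uset n 2 3 (n-6))
     (Uset n 1 ki pi) ((r - 1) / r)"
  unfolding PhiS_def
proof (intro exI conjI)
  let ?x1 = "ee 3 :: nat \<Rightarrow> 'a" and ?x2 = "\<lambda>i. ee 2 i - ee 3 i :: 'a"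
  let ?y1 = "yv n (\<lambda>a. if a = 3 then 1 else (0::'a))"
  let ?y2 = "yv n (\<lambda>a. if a = 2 then 1 else if a = 3 then r else 0)"
  show "?x1 \<in> vecs n" using n by (simp add: vecs_def ee_def)
  show "?x2 \<in> vecs n" using n by (simp add: vecs_def ee_def)
  show "\<forall>z\<in>l2x n (Lset n r) (Wset n \<beta>) (Uset n 2 3 (n - 6)). bform n ?x1 z = 0"
  proof
    fix z assume z: "z \<in> l2x n (Lset n r) (Wset n \<beta>) (Uset n 2 3 (n - 6))"
    have "bform n ?x1 z = z (yi n 3)" using bform_ee1[of 3 n z] n by (simp add: yi_def)
    then show "bform n ?x1 z = 0" using l2_char[OF n b z] by simp
  qed
  show "\<forall>z\<in>l4x n (Lset n r) (Wset n \<beta>) (Uset n a0 0 p0) (Uset n 2 3 (n - 6)) (Uset n 1 ki pi). bform n ?x2 z = 0"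
  proof
    fix z assume z: "z \<in> l4x n (Lset n r) (Wset n \<beta>) (Uset n a0 0 p0) (Uset n 2 3 (n - 6)) (Uset n 1 ki pi)"
    have "bform n ?x2 z = z (yi n 2) - z (yi n 3)"
      using bform_ee1[of 3 n z] bform_ee1[of 2 n z] n by (simp add: yi_def bform_diff1)
    then show "bform n ?x2 z = 0" using l4_char[OF n b z Ui_props(1,2)] by simp
  qed
  show "?y1 \<in> l1x n (Wset n \<beta>) (Uset n a2 2 p2)" by (rule mem_l1[OF n b]) (use a2 in simp)
  show "?y2 \<in> l3x n (Lset n r) (Wset n \<beta>) (Uset n a1 1 p1) (Uset n 2 3 (n - 6))" using mem_l3[OF n b] .
  have e1: "bform n ?x1 ?y1 = 1" "bform n ?x1 ?y2 = r" by (simp_all add: bform_ee_yv[OF n])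
  have e2: "bform n ?x2 ?y1 = -1" "bform n ?x2 ?y2 = 1 - r"
  proof -
    have "bform n ?x2 ?y1 = bform n (ee 2) ?y1 - bform n (ee 3) ?y1" by (rule bform_diff1)
    then show "bform n ?x2 ?y1 = -1" by (simp add: bform_ee_yv[OF n])
    have "bform n ?x2 ?y2 = bform n (ee 2) ?y2 - bform n (ee 3) ?y2" by (rule bform_diff1)
    then show "bform n ?x2 ?y2 = 1 - r" by (simp add: bform_ee_yv[OF n])
  qed
  show "bform n ?x1 ?y2 \<noteq> 0" using e1 r by simp
  show "bform n ?x2 ?y1 \<noteq> 0" using e2 by simp
  show "bform n ?x1 ?y1 * bform n ?x2 ?y2 = (r - 1) / r * (bform n ?x1 ?y2 * bform n ?x2 ?y1)"
    unfolding e1 e2 using r by (simp add: field_simps)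
qed

lemma hard:
  fixes s :: "'a::field"
  assumes s: "s \<noteq> 0"
    and ph: "PhiS n (Lset n s) (Wset n \<beta>) (Uset n a0 0 p0) (Uset n a1 1 p1) (Uset n a2 2 p2) (Uset n 2 3 (n-6))
     (Uset n 1 ki pi) t"
  shows "t * s = s - 1"
proof -
  obtain x1 x2 y1 y2 where w: "x1 \<in> vecs n" "x2 \<in> vecs n"
     "\<forall>z\<in>l2x n (Lset n s) (Wset n \<beta>) (Uset n 2 3 (n-6)). bform n x1 z = 0"
     "\<forall>z\<in>l4x n (Lset n s) (Wset n \<beta>) (Uset n a0 0 p0) (Uset n 2 3 (n-6)) (Uset n 1 ki pi). bform n x2 z = 0"
     "y1 \<in> l1x n (Wset n \<beta>) (Uset n a2 2 p2)" "y2 \<in> l3x n (Lset n s) (Wset n \<beta>) (Uset n a1 1 p1) (Uset n 2 3 (n-6))"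
     "bform n x1 y2 \<noteq> 0" "bform n x2 y1 \<noteq> 0"
     "bform n x1 y1 * bform n x2 y2 = t * (bform n x1 y2 * bform n x2 y1)"
    using ph unfolding PhiS_def by blast
  have sym: "bform n x (yv n c) = (\<Sum>a<6. c a * x a)" for x :: "nat \<Rightarrow> 'a" and c
    using bform_sym[of n x "yv n c"] bform_yv1[OF n, of c x] by simp
  have "bform n x1 (yv n (\<lambda>a. if a = 2 then 1 else 0)) = 0"
    using w(3) mem_l2_yv[OF n b, of s] by blast
  then have x12: "x1 2 = 0" using sym[of x1] by (simp add: sum6)
  have "yv n (\<lambda>a. if a = 2 \<or> a = 3 then 1 else 0) \<in> l4x n (Lset n s) (Wset n \<beta>) (Uset n a0 0 p0) (Uset n 2 3 (n-6)) (Uset n 1 ki pi)"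
    by (rule mem_l4_yv[OF n b]) (rule Ui_props(3))
  then have "bform n x2 (yv n (\<lambda>a. if a = 2 \<or> a = 3 then 1 else 0)) = 0"
    using w(4) by blast
  then have x22: "x2 2 + x2 3 = 0" using sym[of x2] by (simp add: sum6)
  have xpad: "x i = 0" if x: "x = x1 \<or> x = x2" and i: "n \<le> i" "i < 2*n-6" for x i
  proof -
    have k: "6 \<le> 2*n-1-i" "2*n-1-i < n" using i n by auto
    have m4: "ee (2*n-1-i) \<in> l4x n (Lset n s) (Wset n \<beta>) (Uset n a0 0 p0) (Uset n 2 3 (n-6)) (Uset n 1 ki pi)"
      by (rule mem_l4_ee[OF n b k Ui_props(2)])
    have m2: "ee (2*n-1-i) \<in> l2x n (Lset n s) (Wset n \<beta>) (Uset n 2 3 (n-6))"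
      by (rule mem_l2_ee[OF n b k])
    have "bform n x (ee (2*n-1-i)) = 0"
      using x w(3,4) m2 m4 by auto
    moreover have "bform n x (ee (2*n-1-i)) = x i" using bform_ee2[of "2*n-1-i" n x] i by simp
    ultimately show ?thesis by simp
  qed
  note c1 = l1_char[OF n b w(5) a2 p2]
  note zz = w(6)[unfolded l3x_def, THEN IntD2]
  note c3 = l3_char[OF n b w(6)] Zx_char[OF n b zz]
  have B11: "bform n x1 y1 = x1 3 * y1 (yi n 3)"
    using bform_Ystar[OF n, of x1 y1] xpad[of x1] c1 by (simp add: sum6)
  have B21: "bform n x2 y1 = x2 3 * y1 (yi n 3)"
    using bform_Ystar[OF n, of x2 y1] xpad[of x2] c1 by (simp add: sum6)
  have B12: "bform n x1 y2 = x1 3 * (s * y2 (yi n 2))"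
    using bform_Ystar[OF n, of x1 y2] xpad[of x1] c3 x12 by (simp add: sum6)
  have B22: "bform n x2 y2 = x2 3 * y2 (yi n 2) * (s - 1)"
  proof -
    have "bform n x2 y2 = x2 2 * y2 (yi n 2) + x2 3 * (s * y2 (yi n 2))"
      using bform_Ystar[OF n, of x2 y2] xpad[of x2] c3 by (simp add: sum6)
    also have "x2 2 = - x2 3" using x22 by (simp add: eq_neg_iff_add_eq_0)
    finally show ?thesis by (simp add: algebra_simps)
  qed
  define K where "K = x1 3 * y2 (yi n 2) * x2 3 * y1 (yi n 3)"
  have K: "K \<noteq> 0" using w(7,8) B12 B21 unfolding K_def by auto
  have "K * (s - 1) = K * (t * s)"
    using w(9) unfolding B11 B21 B12 B22 K_def by (simp add: algebra_simps)
  then show ?thesis using K by simp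
qed

end

definition idM :: "nat \<Rightarrow> nat \<Rightarrow> 'a::field" where "idM = (\<lambda>i j. if i = j then 1 else 0)"

lemma mat_act_id: "v \<in> vecs n \<Longrightarrow> mat_act n idM v = v"
proof
  fix i assume v: "v \<in> vecs n"
  show "mat_act n idM v i = v i"
  proof (cases "i < 2*n")
    case True
    have "(\<Sum>j<2*n. idM i j * v j) = (\<Sum>j<2*n. if i = j then v j else 0)"
      by (rule sum.cong) (auto simp: idM_def)
    also have "\<dots> = v i" using True by simp
    finally show ?thesis using True by (simp add: mat_act_def)
  next
    case False then show ?thesis using v by (simp add: mat_act_def vecs_def)
  qed
qed

lemma id_orth: "mat_act n idM \<in> orth_group n"
proof -
  have b: "bij_betw (mat_act n idM) (vecs n) (vecs n)"
    by (rule bij_betw_cong[THEN iffD2, of _ _ id]) (auto simp: mat_act_id)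
  have "\<forall>u\<in>vecs n. \<forall>v\<in>vecs n. bform n (mat_act n idM u) (mat_act n idM v) = bform n u v"
    by (simp add: mat_act_id)
  then show ?thesis unfolding orth_group_def using b by blast
qed

lemma flag_act_id: "\<forall>V\<in>set X. V \<subseteq> vecs n \<Longrightarrow> flag_act (mat_act n idM) X = X"
proof -
  assume h: "\<forall>V\<in>set X. V \<subseteq> vecs n"
  have "(\<lambda>V. mat_act n idM ` V) V = V" if "V \<in> set X" for V
  proof -
    have "mat_act n idM ` V = id ` V" by (rule image_cong) (use h that mat_act_id in auto)
    then show ?thesis by simp
  qed
  then show ?thesis unfolding flag_act_def by (simp add: map_idI)
qed

lemma mat_act_add: "mat_act n M (\<lambda>i. x i + y i) = (\<lambda>i. mat_act n M x i + mat_act n M y i)"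
  by (auto simp: mat_act_def fun_eq_iff sum.distrib distrib_left)

lemma infinite_nonzero: "infinite (UNIV :: 'a::zero set) \<Longrightarrow> infinite {r :: 'a. r \<noteq> 0}"
proof
  assume inf: "infinite (UNIV :: 'a set)" and fin: "finite {r :: 'a. r \<noteq> 0}"
  have "UNIV = insert 0 {r :: 'a. r \<noteq> 0}" by auto
  then have "finite (UNIV :: 'a set)" using fin by (metis finite_insert)
  then show False using inf by simp
qed

theorem proposition3p17:
  fixes n \<beta> \<gamma>1 \<gamma>2 \<gamma>3 \<gamma>4 :: nat
  assumes "infinite (UNIV :: 'a::field set)"
    and "(2::'a) \<noteq> 0"
    and "4 \<le> \<beta>" and "\<beta> + 2 \<le> n"
    and "0 < \<gamma>1" "0 < \<gamma>2" "0 < \<gamma>3" "0 < \<gamma>4"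
    and "\<gamma>1 + \<gamma>2 + \<gamma>3 + \<gamma>4 = n"
    and "\<exists>i j. i < j \<and> j < 4 \<and> 2 \<le> [\<gamma>1, \<gamma>2, \<gamma>3, \<gamma>4] ! i \<and> 2 \<le> [\<gamma>1, \<gamma>2, \<gamma>3, \<gamma>4] ! j"
  shows "infinite (triple_orbits n [n] [\<beta>] [\<gamma>1, \<gamma>2, \<gamma>3, \<gamma>4] :: ((nat \<Rightarrow> 'a) set list \<times> _) set set)"
proof -
  obtain i0 j0 where ij: "i0 < j0" "j0 < 4" "2 \<le> [\<gamma>1, \<gamma>2, \<gamma>3, \<gamma>4] ! i0" "2 \<le> [\<gamma>1, \<gamma>2, \<gamma>3, \<gamma>4] ! j0"
    using assms(10) by blast
  have n: "6 \<le> n" using assms(3,4) by simp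
  have b: "\<beta> + 2 \<le> n" "4 \<le> \<beta>" using assms(3,4) by auto
  note ctx = assms(5-8) assms(9) ij
  let ?gs = "[\<gamma>1, \<gamma>2, \<gamma>3, \<gamma>4]"
  define Z :: "(nat \<Rightarrow> 'a) set list" where "Z = Zfl n ?gs i0 j0"
  define fam where "fam = (\<lambda>r::'a. ([Lset n r], [Wset n \<beta> :: (nat \<Rightarrow> 'a) set], Z))"
  define Orb :: "(nat \<Rightarrow> 'a) set list \<times> (nat \<Rightarrow> 'a) set list \<times> (nat \<Rightarrow> 'a) set list
      \<Rightarrow> ((nat \<Rightarrow> 'a) set list \<times> (nat \<Rightarrow> 'a) set list \<times> (nat \<Rightarrow> 'a) set list) set"
    where "Orb = (\<lambda>(X, Y, Zs). (\<lambda>g. (flag_act g X, flag_act g Y, flag_act g Zs)) ` orth_group n)"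
  have i04: "i0 < 4" using ij by simp
  have aUi: "aU i0 j0 i0 = 1" using ij by (simp add: aU_def)
  have Zn: "Z ! k = Uset n (aU i0 j0 k) k (pU ?gs i0 j0 k)" if "k < 4" for k
    using that unfolding Z_def Zfl_def by simp
  have Z0: "Z ! 0 = Uset n (aU i0 j0 0) 0 (pU ?gs i0 j0 0)" using Zn[of 0] by simp
  have Z1: "Z ! 1 = Uset n (aU i0 j0 1) 1 (pU ?gs i0 j0 1)" using Zn[of 1] by simp
  have Z2: "Z ! 2 = Uset n (aU i0 j0 2) 2 (pU ?gs i0 j0 2)" using Zn[of 2] by simp
  have Z3: "Z ! 3 = Uset n 2 3 (n - 6)" using Zn[of 3] aU_3[OF ctx] pU_3[OF ctx] by simp
  have Zi: "Z ! i0 = Uset n 1 i0 (pU ?gs i0 j0 i0)" using Zn[OF i04] aUi by simp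
  have a2: "aU i0 j0 2 \<le> 2" by (rule aU_le[OF ctx])
  have p2: "6 + pU ?gs i0 j0 2 \<le> n" by (rule pU_le[OF ctx]) simp
  have pi: "6 + pU ?gs i0 j0 i0 \<le> n" by (rule pU_le[OF ctx i04])
  have lenZ: "length Z = 4" by (simp add: Z_def Zfl_def)
  have Zvecs: "\<forall>V\<in>set Z. V \<subseteq> vecs n" by (auto simp: Z_def Zfl_def U_vecs)
  have fam_in: "fam r \<in> triple_space n [n] [\<beta>] ?gs" for r
    unfolding fam_def triple_space_def Z_def
    using L_flags[OF n, of r] W_flags[OF n b(1) b(2)] Z_flags[OF ctx] by auto
  have self: "fam s \<in> Orb (fam s)" for s
  proof -
    have "flag_act (mat_act n idM) [Lset n s] = [Lset n s]" by (rule flag_act_id) (simp add: L_vecs)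
    moreover have "flag_act (mat_act n idM) [Wset n \<beta> :: (nat \<Rightarrow> 'a) set] = [Wset n \<beta>]"
      by (rule flag_act_id) (simp add: W_vecs)
    moreover have "flag_act (mat_act n idM) Z = Z" by (rule flag_act_id[OF Zvecs])
    ultimately show ?thesis unfolding Orb_def fam_def using id_orth[of n] by force
  qed
  have key: "r = s" if r: "r \<noteq> 0" and s: "s \<noteq> 0" and eq: "Orb (fam r) = Orb (fam s)" for r s
  proof -
    have "fam s \<in> Orb (fam r)" using self[of s] eq by simp
    then obtain g where g: "g \<in> orth_group n"
      and fs: "fam s = (flag_act g [Lset n r], flag_act g [Wset n \<beta>], flag_act g Z)"
      unfolding Orb_def fam_def by auto
    obtain M where M: "g = mat_act n M" "bij_betw g (vecs n) (vecs n)"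
      "\<forall>u\<in>vecs n. \<forall>v\<in>vecs n. bform n (g u) (g v) = bform n u v"
      using g unfolding orth_group_def by blast
    have addg: "\<And>x y. g (\<lambda>i. x i + y i) = (\<lambda>i. g x i + g y i)" using M(1) mat_act_add by simp
    have Ls: "Lset n s = g ` Lset n r" and Ws: "Wset n \<beta> = g ` Wset n \<beta>" and Zs: "Z = map (\<lambda>V. g ` V) Z"
      using fs unfolding fam_def flag_act_def by auto
    have Zk: "Z ! k = g ` (Z ! k)" if "k < 4" for k
      using arg_cong[OF Zs, of "\<lambda>l. l ! k"] that lenZ by simp
    have ph: "PhiS n (Lset n r) (Wset n \<beta>) (Z!0) (Z!1) (Z!2) (Z!3) (Z!i0) ((r - 1) / r)"
      unfolding Z0 Z1 Z2 Z3 Zi by (rule easy[OF n b a2 p2 pi r])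
    have sets: "Lset n r \<subseteq> vecs n" "(Wset n \<beta> :: (nat \<Rightarrow> 'a) set) \<subseteq> vecs n" "Z!0 \<subseteq> vecs n" "Z!1 \<subseteq> vecs n" "Z!2 \<subseteq> vecs n"
      "Z!3 \<subseteq> vecs n" "Z!i0 \<subseteq> vecs n"
      using L_vecs W_vecs[where 'a='a] Zvecs lenZ i04 by (auto simp del: One_nat_def)
    have "PhiS n (g ` Lset n r) (g ` Wset n \<beta>) (g ` (Z!0)) (g ` (Z!1)) (g ` (Z!2)) (g ` (Z!3)) (g ` (Z!i0)) ((r - 1) / r)"
      by (rule PhiS_inv[OF M(2) _ addg sets ph]) (use M(3) in blast)
    then have "PhiS n (Lset n s) (Wset n \<beta>) (Z!0) (Z!1) (Z!2) (Z!3) (Z!i0) ((r - 1) / r)"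
      using Ls Ws Zk[of 0] Zk[of 1] Zk[of 2] Zk[of 3] Zk[OF i04] by simp
    then have "(r - 1) / r * s = s - 1"
      unfolding Z0 Z1 Z2 Z3 Zi by (rule hard[OF n b a2 p2 pi s])
    then show "r = s" using r s by (simp add: field_simps)
  qed
  have inj: "inj_on (\<lambda>r. Orb (fam r)) {r. r \<noteq> 0}"
    by (rule inj_onI) (use key in auto)
  have "infinite ((\<lambda>r. Orb (fam r)) ` {r :: 'a. r \<noteq> 0})"
    using finite_imageD[OF _ inj] infinite_nonzero[OF assms(1)] by blast
  moreover have "(\<lambda>r. Orb (fam r)) ` {r :: 'a. r \<noteq> 0} \<subseteq> triple_orbits n [n] [\<beta>] ?gs"
    unfolding triple_orbits_def Orb_def using fam_in by blast
  ultimately show ?thesis using finite_subset by blast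
qed

end
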